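(* Let $G$ be a finite group acting freely on $X$ and $n\ge 2$. Then \[\mathsf{TC}^G_{\mathsf{effv},n}(X)\le \mathsf{TC}^G_{\mathsf{effl},n}(X)\le \mathsf{TC}_n(X/G)\le \mathsf{TC}^G_{\mathsf{orb},n}(X).\]
   Context: All spaces are Hausdorff, path-connected and locally path-connected; $G$ acts on the right, $\pi:X\to X/G$ is the quotient map. Sectional category $\mathrm{secat}(p)$ is non-reduced: the least number of open sets covering the base, each admitting a continuous section of $p$. $PX$ is the path space. $M_n(X)$ is the space of multipaths: $n$-tuples $(\alpha_1,\ldots,\alpha_n)\in(PX)^n$ with $\alpha_1(0)=\cdots=\alpha_n(0)$, and $e_n:M_n(X)\to X^n$ evaluates at $1$; $\mathsf{TC}_n(X)=\mathrm{secat}(e_n)$. $M^G_n(X)$ is the subspace of $PX\times G\times\cdots\times G\times PX$ ($n$ path factors, $n-1$ group factors) of tuples $(\alpha_1,g_1,\ldots,g_{n-1},\alpha_n)$ with $\alpha_i(0)g_i=\alpha_{i+1}(0)$; $\epsilon_n:M^G_n(X)\to X^n$ evaluates the paths at $1$; $\mathsf{TC}^G_{\mathsf{effv},n}(X)=\mathrm{secat}(\epsilon_n)$. $\mathsf{TC}^G_{\mathsf{effl},n}(X)=\mathrm{secat}(\varepsilon_n)$ where $\varepsilon_n=(1\times\pi^{n-1})\circ e_n:M_n(X)\to X\times(X/G)^{n-1}$. $\mathsf{TC}^G_{\mathsf{orb},n}(X)=\mathrm{secat}(\pi^n\circ e_n: M_n(X)\to (X/G)^n)$. *)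

theory Defs
  imports "HOL-Analysis.Analysis" "HOL-Library.Extended_Nat" "HOL-Algebra.Group"
begin

section \<open>Sectional category (non-reduced)\<close>

definition secat :: "'e topology \<Rightarrow> 'b topology \<Rightarrow> ('e \<Rightarrow> 'b) \<Rightarrow> enat" where
  "secat E B p = Inf {enat k | k. \<exists>U :: nat \<Rightarrow> 'b set.
      topspace B \<subseteq> (\<Union>i<k. U i) \<and>
      (\<forall>i<k. openin B (U i) \<and>
         (\<exists>s. continuous_map (subtopology B (U i)) E s \<and> (\<forall>b\<in>U i. p (s b) = b)))}"

definition paths :: "'a topology \<Rightarrow> (real \<Rightarrow> 'a) set" where
  "paths X = {f. pathin X f \<and> f \<in> extensional {0..1}}"

definition path_space :: "'a topology \<Rightarrow> (real \<Rightarrow> 'a) topology" where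
  "path_space X = topology_generated_by
     {{f \<in> paths X. f ` K \<subseteq> V} | K V. compact K \<and> K \<subseteq> {0..1} \<and> openin X V}"

definition power_top :: "'a topology \<Rightarrow> nat \<Rightarrow> (nat \<Rightarrow> 'a) topology" where
  "power_top X n = product_topology (\<lambda>i. X) {..<n}"

definition multipath_space :: "'a topology \<Rightarrow> nat \<Rightarrow> (nat \<Rightarrow> real \<Rightarrow> 'a) topology" where
  "multipath_space X n = subtopology (power_top (path_space X) n)
     {\<alpha> \<in> topspace (power_top (path_space X) n). \<forall>i<n. \<forall>j<n. \<alpha> i 0 = \<alpha> j 0}"

definition eval_end :: "nat \<Rightarrow> (nat \<Rightarrow> real \<Rightarrow> 'a) \<Rightarrow> (nat \<Rightarrow> 'a)" where
  "eval_end n \<alpha> = (\<lambda>i\<in>{..<n}. \<alpha> i 1)"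

definition TC :: "nat \<Rightarrow> 'a topology \<Rightarrow> enat" where
  "TC n X = secat (multipath_space X n) (power_top X n) (eval_end n)"

definition right_action :: "('g, 'm) monoid_scheme \<Rightarrow> 'a topology \<Rightarrow> ('a \<Rightarrow> 'g \<Rightarrow> 'a) \<Rightarrow> bool" where
  "right_action G X act \<longleftrightarrow> group G \<and>
     (\<forall>g\<in>carrier G. continuous_map X X (\<lambda>x. act x g)) \<and>
     (\<forall>x\<in>topspace X. act x \<one>\<^bsub>G\<^esub> = x) \<and>
     (\<forall>x\<in>topspace X. \<forall>g\<in>carrier G. \<forall>h\<in>carrier G. act (act x g) h = act x (g \<otimes>\<^bsub>G\<^esub> h))"

definition free_action :: "('g, 'm) monoid_scheme \<Rightarrow> 'a topology \<Rightarrow> ('a \<Rightarrow> 'g \<Rightarrow> 'a) \<Rightarrow> bool" where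
  "free_action G X act \<longleftrightarrow> right_action G X act \<and>
     (\<forall>x\<in>topspace X. \<forall>g\<in>carrier G. act x g = x \<longrightarrow> g = \<one>\<^bsub>G\<^esub>)"

definition orbit_map :: "('g, 'm) monoid_scheme \<Rightarrow> ('a \<Rightarrow> 'g \<Rightarrow> 'a) \<Rightarrow> 'a \<Rightarrow> 'a set" where
  "orbit_map G act x = (\<lambda>g. act x g) ` carrier G"

definition quotient_top :: "'a topology \<Rightarrow> ('a \<Rightarrow> 'b) \<Rightarrow> 'b topology" where
  "quotient_top X q = topology (\<lambda>U. U \<subseteq> q ` topspace X \<and> openin X {x \<in> topspace X. q x \<in> U})"

lemma istopology_quotient_top:
  "istopology (\<lambda>U. U \<subseteq> q ` topspace X \<and> openin X {x \<in> topspace X. q x \<in> U})"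
proof -
  have "{x \<in> topspace X. q x \<in> S \<inter> T} = {x \<in> topspace X. q x \<in> S} \<inter> {x \<in> topspace X. q x \<in> T}" for S T
    by auto
  moreover have "{x \<in> topspace X. q x \<in> \<Union>K} = (\<Union>U\<in>K. {x \<in> topspace X. q x \<in> U})" for K
    by auto
  ultimately show ?thesis
    unfolding istopology_def by (auto intro!: openin_Union)
qed

definition orbit_space :: "'a topology \<Rightarrow> ('g, 'm) monoid_scheme \<Rightarrow> ('a \<Rightarrow> 'g \<Rightarrow> 'a) \<Rightarrow> 'a set topology" where
  "orbit_space X G act = quotient_top X (orbit_map G act)"

text \<open>The factors are grouped as
  (paths, group elements), which is homeomorphic to the interleaved product.\<close>
definition multipath_G_space :: "'a topology \<Rightarrow> ('g, 'm) monoid_scheme \<Rightarrow> ('a \<Rightarrow> 'g \<Rightarrow> 'a) \<Rightarrow> nat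
    \<Rightarrow> ((nat \<Rightarrow> real \<Rightarrow> 'a) \<times> (nat \<Rightarrow> 'g)) topology" where
  "multipath_G_space X G act n =
     (let T = prod_topology (power_top (path_space X) n) (power_top (discrete_topology (carrier G)) (n - 1))
      in subtopology T {(\<alpha>, g) \<in> topspace T. \<forall>i < n - 1. act (\<alpha> i 0) (g i) = \<alpha> (Suc i) 0})"

definition TC_effv :: "nat \<Rightarrow> 'a topology \<Rightarrow> ('g, 'm) monoid_scheme \<Rightarrow> ('a \<Rightarrow> 'g \<Rightarrow> 'a) \<Rightarrow> enat" where
  "TC_effv n X G act = secat (multipath_G_space X G act n) (power_top X n) (\<lambda>(\<alpha>, g). eval_end n \<alpha>)"

definition TC_effl :: "nat \<Rightarrow> 'a topology \<Rightarrow> ('g, 'm) monoid_scheme \<Rightarrow> ('a \<Rightarrow> 'g \<Rightarrow> 'a) \<Rightarrow> enat" where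
  "TC_effl n X G act = secat (multipath_space X n)
      (prod_topology X (power_top (orbit_space X G act) (n - 1)))
      (\<lambda>\<alpha>. (\<alpha> 0 1, \<lambda>i\<in>{..<n - 1}. orbit_map G act (\<alpha> (Suc i) 1)))"

definition TC_orb :: "nat \<Rightarrow> 'a topology \<Rightarrow> ('g, 'm) monoid_scheme \<Rightarrow> ('a \<Rightarrow> 'g \<Rightarrow> 'a) \<Rightarrow> enat" where
  "TC_orb n X G act = secat (multipath_space X n) (power_top (orbit_space X G act) n)
      (\<lambda>\<alpha>. \<lambda>i\<in>{..<n}. orbit_map G act (\<alpha> i 1))"

end

theory Submission
  imports Defs
begin

lemma topspace_path_space: "topspace (path_space X) = paths X"
proof -
  have "paths X \<in> {{f \<in> paths X. f ` K \<subseteq> V} | K V. compact K \<and> K \<subseteq> {0..1} \<and> openin X V}"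
    by (rule CollectI, rule exI[of _ "{}"], rule exI[of _ "topspace X"]) auto
  then show ?thesis unfolding path_space_def by auto
qed

lemma openin_path_space_basic:
  assumes "compact K" "K \<subseteq> {0..1}" "openin X V"
  shows "openin (path_space X) {f \<in> paths X. f ` K \<subseteq> V}"
  unfolding path_space_def by (rule topology_generated_by_Basis) (use assms in blast)

lemma paths_topspace: "f \<in> paths X \<Longrightarrow> t \<in> {0..1} \<Longrightarrow> f t \<in> topspace X"
  unfolding paths_def pathin_def
  by (auto simp: continuous_map_def Pi_iff)

lemma continuous_map_path_spaceI:
  assumes "\<And>t. t \<in> topspace T \<Longrightarrow> F t \<in> paths X"
    and "\<And>K V. compact K \<Longrightarrow> K \<subseteq> {0..1} \<Longrightarrow> openin X V \<Longrightarrow> openin T {t \<in> topspace T. F t ` K \<subseteq> V}"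
  shows "continuous_map T (path_space X) F"
  unfolding path_space_def
proof (rule continuous_on_generated_topo)
  fix U assume "U \<in> {{f \<in> paths X. f ` K \<subseteq> V} | K V. compact K \<and> K \<subseteq> {0..1} \<and> openin X V}"
  then obtain K V where KV: "compact K" "K \<subseteq> {0..1}" "openin X V" and U: "U = {f \<in> paths X. f ` K \<subseteq> V}"
    by blast
  have "F -` U \<inter> topspace T = {t \<in> topspace T. F t ` K \<subseteq> V}"
    using assms(1) U by auto
  then show "openin T (F -` U \<inter> topspace T)" using assms(2)[OF KV] by simp
next
  show "F ` topspace T \<subseteq> \<Union> {{f \<in> paths X. f ` K \<subseteq> V} | K V. compact K \<and> K \<subseteq> {0..1} \<and> openin X V}"
    using topspace_path_space[of X] assms(1) unfolding path_space_def by auto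
qed

lemma continuous_map_path_space_preimage:
  assumes "continuous_map T (path_space X) F" "compact K" "K \<subseteq> {0..1}" "openin X V"
  shows "openin T {t \<in> topspace T. F t ` K \<subseteq> V}"
proof -
  have "openin T {t \<in> topspace T. F t \<in> {f \<in> paths X. f ` K \<subseteq> V}}"
    by (rule openin_continuous_map_preimage[OF assms(1) openin_path_space_basic[OF assms(2-4)]])
  moreover have "{t \<in> topspace T. F t \<in> {f \<in> paths X. f ` K \<subseteq> V}} = {t \<in> topspace T. F t ` K \<subseteq> V}"
    using continuous_map_image_subset_topspace[OF assms(1)] topspace_path_space[of X] by auto
  ultimately show ?thesis by simp
qed

lemma continuous_map_path_space_paths:
  "continuous_map T (path_space X) F \<Longrightarrow> t \<in> topspace T \<Longrightarrow> F t \<in> paths X"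
  using continuous_map_image_subset_topspace topspace_path_space by blast

definition pcomp :: "('a \<Rightarrow> 'b) \<Rightarrow> (real \<Rightarrow> 'a) \<Rightarrow> (real \<Rightarrow> 'b)" where
  "pcomp h f = (\<lambda>t\<in>{0..1}. h (f t))"

lemma pcomp_paths:
  assumes "continuous_map X Y h" "f \<in> paths X"
  shows "pcomp h f \<in> paths Y"
proof -
  have "pathin Y (h \<circ> f)" using assms unfolding paths_def pathin_def
    by (auto intro: continuous_map_compose)
  then have "pathin Y (pcomp h f)" unfolding pathin_def pcomp_def
    by (rule continuous_map_eq) auto
  then show ?thesis unfolding paths_def pcomp_def by auto
qed

lemma continuous_map_pcomp:
  assumes "continuous_map X Y h"
  shows "continuous_map (path_space X) (path_space Y) (pcomp h)"
proof (rule continuous_map_path_spaceI)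
  fix t assume "t \<in> topspace (path_space X)"
  then show "pcomp h t \<in> paths Y" using pcomp_paths[OF assms] topspace_path_space by blast
next
  fix K :: "real set" and V assume KV: "compact K" "K \<subseteq> {0..1}" "openin Y V"
  have "openin (path_space X) {f \<in> paths X. f ` K \<subseteq> {x \<in> topspace X. h x \<in> V}}"
    by (rule openin_path_space_basic[OF KV(1,2)]) (rule openin_continuous_map_preimage[OF assms KV(3)])
  moreover have "{f \<in> paths X. f ` K \<subseteq> {x \<in> topspace X. h x \<in> V}} = {t \<in> topspace (path_space X). pcomp h t ` K \<subseteq> V}"
    using KV(2) paths_topspace[of _ X] unfolding topspace_path_space pcomp_def by (auto simp: subset_iff)
  ultimately show "openin (path_space X) {t \<in> topspace (path_space X). pcomp h t ` K \<subseteq> V}" by simp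
qed

lemma continuous_map_eval:
  assumes "s \<in> {0..1}"
  shows "continuous_map (path_space X) X (\<lambda>f. f s)"
  unfolding continuous_map_def
proof safe
  fix f assume "f \<in> topspace (path_space X)"
  then show "f s \<in> topspace X" using paths_topspace assms topspace_path_space by blast
next
  fix U assume "openin X U"
  then have "openin (path_space X) {f \<in> paths X. f ` {s} \<subseteq> U}"
    by (intro openin_path_space_basic) (use assms in auto)
  moreover have "{f \<in> paths X. f ` {s} \<subseteq> U} = {x \<in> topspace (path_space X). x s \<in> U}"
    by (auto simp: topspace_path_space)
  ultimately show "openin (path_space X) {x \<in> topspace (path_space X). x s \<in> U}" by simp
qed

definition prev :: "(real \<Rightarrow> 'a) \<Rightarrow> (real \<Rightarrow> 'a)" where
  "prev f = (\<lambda>t\<in>{0..1}. f (1 - t))"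

lemma prev_paths:
  assumes "f \<in> paths X" shows "prev f \<in> paths X"
proof -
  have "continuous_map (top_of_set {0..1}) (top_of_set {0..1}) (\<lambda>t::real. 1 - t)"
    by (auto simp: continuous_map_in_subtopology intro!: continuous_intros)
  moreover have "continuous_map (top_of_set {0..1}) X f" using assms unfolding paths_def pathin_def by simp
  ultimately have "pathin X (f \<circ> (\<lambda>t. 1 - t))" unfolding pathin_def
    by (rule continuous_map_compose)
  then have "pathin X (prev f)" unfolding pathin_def prev_def
    by (rule continuous_map_eq) auto
  then show ?thesis unfolding paths_def prev_def by auto
qed

lemma continuous_map_prev: "continuous_map (path_space X) (path_space X) prev"
proof (rule continuous_map_path_spaceI)
  fix t assume "t \<in> topspace (path_space X)"
  then show "prev t \<in> paths X" using prev_paths topspace_path_space by blast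
next
  fix K :: "real set" and V assume KV: "compact K" "K \<subseteq> {0..1}" "openin X V"
  have c: "compact ((\<lambda>t::real. 1 - t) ` K)"
    by (rule compact_continuous_image[OF _ KV(1)]) (intro continuous_intros)
  have "openin (path_space X) {f \<in> paths X. f ` ((\<lambda>t. 1 - t) ` K) \<subseteq> V}"
    by (rule openin_path_space_basic[OF c _ KV(3)]) (use KV(2) in auto)
  moreover have "{f \<in> paths X. f ` ((\<lambda>t. 1 - t) ` K) \<subseteq> V} = {t \<in> topspace (path_space X). prev t ` K \<subseteq> V}"
    using KV(2) unfolding topspace_path_space prev_def by (auto simp: subset_iff)
  ultimately show "openin (path_space X) {t \<in> topspace (path_space X). prev t ` K \<subseteq> V}" by simp
qed

lemma secat_le:
  assumes f: "continuous_map B' B f"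
    and sec: "\<And>U s. openin B U \<Longrightarrow> continuous_map (subtopology B U) E s \<Longrightarrow> (\<forall>b\<in>U. p (s b) = b) \<Longrightarrow>
       \<exists>s'. continuous_map (subtopology B' {b \<in> topspace B'. f b \<in> U}) E' s' \<and>
            (\<forall>b\<in>{b \<in> topspace B'. f b \<in> U}. p' (s' b) = b)"
  shows "secat E' B' p' \<le> secat E B p"
  unfolding secat_def
proof (rule Inf_superset_mono, rule subsetI)
  fix x assume "x \<in> {enat k | k. \<exists>U :: nat \<Rightarrow> _ set.
      topspace B \<subseteq> (\<Union>i<k. U i) \<and>
      (\<forall>i<k. openin B (U i) \<and> (\<exists>s. continuous_map (subtopology B (U i)) E s \<and> (\<forall>b\<in>U i. p (s b) = b)))}"
  then obtain k U where x: "x = enat k" and cov: "topspace B \<subseteq> (\<Union>i<k. U i)"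
    and H: "\<forall>i<k. openin B (U i) \<and> (\<exists>s. continuous_map (subtopology B (U i)) E s \<and> (\<forall>b\<in>U i. p (s b) = b))"
    by blast
  define U' where "U' i = {b \<in> topspace B'. f b \<in> U i}" for i
  have "topspace B' \<subseteq> (\<Union>i<k. U' i)"
    using cov continuous_map_image_subset_topspace[OF f] unfolding U'_def by blast
  moreover have "\<forall>i<k. openin B' (U' i) \<and> (\<exists>s. continuous_map (subtopology B' (U' i)) E' s \<and> (\<forall>b\<in>U' i. p' (s b) = b))"
  proof (intro allI impI conjI)
    fix i assume i: "i < k"
    then obtain s where o: "openin B (U i)" and s: "continuous_map (subtopology B (U i)) E s" "\<forall>b\<in>U i. p (s b) = b"
      using H by blast
    show "openin B' (U' i)" unfolding U'_def by (rule openin_continuous_map_preimage[OF f o])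
    show "\<exists>s. continuous_map (subtopology B' (U' i)) E' s \<and> (\<forall>b\<in>U' i. p' (s b) = b)"
      unfolding U'_def by (rule sec[OF o s])
  qed
  ultimately have "\<exists>U::nat \<Rightarrow> _. topspace B' \<subseteq> (\<Union>i<k. U i) \<and>
      (\<forall>i<k. openin B' (U i) \<and> (\<exists>s. continuous_map (subtopology B' (U i)) E' s \<and> (\<forall>b\<in>U i. p' (s b) = b)))"
    by (intro exI[of _ U'] conjI)
  then show "x \<in> {enat k | k. \<exists>U :: nat \<Rightarrow> _ set.
      topspace B' \<subseteq> (\<Union>i<k. U i) \<and>
      (\<forall>i<k. openin B' (U i) \<and> (\<exists>s. continuous_map (subtopology B' (U i)) E' s \<and> (\<forall>b\<in>U i. p' (s b) = b)))}"
    unfolding x by blast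
qed

lemma openin_finite_all:
  assumes "finite J" "\<And>j. j \<in> J \<Longrightarrow> openin T {t \<in> topspace T. P j t}"
  shows "openin T {t \<in> topspace T. \<forall>j\<in>J. P j t}"
  using assms
proof (induction J rule: finite_induct)
  case empty then show ?case by simp
next
  case (insert j J)
  have "{t \<in> topspace T. \<forall>j\<in>insert j J. P j t} = {t \<in> topspace T. P j t} \<inter> {t \<in> topspace T. \<forall>j\<in>J. P j t}"
    by auto
  then show ?case using insert by auto
qed



locale fa =
  fixes X :: "'a topology" and G :: "('g, 'm) monoid_scheme" and act :: "'a \<Rightarrow> 'g \<Rightarrow> 'a"
  assumes fr: "free_action G X act" and fin: "finite (carrier G)" and haus: "Hausdorff_space X"
begin

abbreviation "orb \<equiv> orbit_map G act"
abbreviation "Q \<equiv> orbit_space X G act"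

lemma grp: "group G" using fr unfolding free_action_def right_action_def by blast

lemma act_cont: "g \<in> carrier G \<Longrightarrow> continuous_map X X (\<lambda>x. act x g)"
  using fr unfolding free_action_def right_action_def by blast

lemma act_top: "x \<in> topspace X \<Longrightarrow> g \<in> carrier G \<Longrightarrow> act x g \<in> topspace X"
  using act_cont continuous_map_image_subset_topspace by fastforce

lemma act_one: "x \<in> topspace X \<Longrightarrow> act x \<one>\<^bsub>G\<^esub> = x"
  using fr unfolding free_action_def right_action_def by blast

lemma act_mult: "x \<in> topspace X \<Longrightarrow> g \<in> carrier G \<Longrightarrow> h \<in> carrier G \<Longrightarrow> act (act x g) h = act x (g \<otimes>\<^bsub>G\<^esub> h)"
  using fr unfolding free_action_def right_action_def by blast

lemma act_free: "x \<in> topspace X \<Longrightarrow> g \<in> carrier G \<Longrightarrow> act x g = x \<Longrightarrow> g = \<one>\<^bsub>G\<^esub>"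
  using fr unfolding free_action_def by blast

lemma act_inv: "x \<in> topspace X \<Longrightarrow> g \<in> carrier G \<Longrightarrow> act (act x g) (inv\<^bsub>G\<^esub> g) = x"
  using act_mult act_one grp by (simp add: group.r_inv group.inv_closed)

lemma act_inv': "x \<in> topspace X \<Longrightarrow> g \<in> carrier G \<Longrightarrow> act (act x (inv\<^bsub>G\<^esub> g)) g = x"
  using act_mult act_one grp by (simp add: group.l_inv group.inv_closed)

lemma act_cancel:
  assumes "x \<in> topspace X" "g \<in> carrier G" "h \<in> carrier G" "act x g = act x h"
  shows "g = h"
proof -
  have "act x (g \<otimes>\<^bsub>G\<^esub> inv\<^bsub>G\<^esub> h) = x"
    using assms act_mult[of x g "inv\<^bsub>G\<^esub> h"] act_inv[of x h] grp
    by (simp add: group.inv_closed)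
  then have "g \<otimes>\<^bsub>G\<^esub> inv\<^bsub>G\<^esub> h = \<one>\<^bsub>G\<^esub>"
    using act_free assms grp by (simp add: group.inv_closed monoid.m_closed group.is_monoid)
  then show ?thesis using assms grp
    by (metis group.inv_closed group.inv_equality group.inv_inv group.is_monoid monoid.m_closed
        group.l_inv group.r_inv)
qed

lemma openin_Q: "openin Q U \<longleftrightarrow> U \<subseteq> orb ` topspace X \<and> openin X {x \<in> topspace X. orb x \<in> U}"
  unfolding orbit_space_def quotient_top_def
  by (simp only: topology_inverse'[OF istopology_quotient_top])

lemma topspace_Q: "topspace Q = orb ` topspace X"
proof -
  have "{x \<in> topspace X. orb x \<in> orb ` topspace X} = topspace X" by auto
  then have "openin Q (orb ` topspace X)" unfolding openin_Q by simp
  then have "orb ` topspace X \<subseteq> topspace Q" by (rule openin_subset)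
  moreover have "topspace Q \<subseteq> orb ` topspace X" using openin_Q[of "topspace Q"] by simp
  ultimately show ?thesis by blast
qed

lemma pi_cont: "continuous_map X Q orb"
  unfolding continuous_map_def topspace_Q
proof safe
  fix U assume "openin Q U"
  then show "openin X {x \<in> topspace X. orb x \<in> U}" using openin_Q by blast
qed auto

lemma pi_eq:
  assumes "x \<in> topspace X" "y \<in> topspace X"
  shows "orb x = orb y \<longleftrightarrow> (\<exists>g\<in>carrier G. act x g = y)"
proof
  assume "orb x = orb y"
  moreover have "y \<in> orb y" unfolding orbit_map_def using act_one[OF assms(2)] grp
    by (metis group.is_monoid image_eqI monoid.one_closed)
  ultimately have "y \<in> (\<lambda>g. act x g) ` carrier G" unfolding orbit_map_def by simp
  then show "\<exists>g\<in>carrier G. act x g = y" by blast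
next
  assume "\<exists>g\<in>carrier G. act x g = y"
  then obtain g where g: "g \<in> carrier G" "act x g = y" by blast
  show "orb x = orb y"
    unfolding orbit_map_def
  proof safe
    fix h assume h: "h \<in> carrier G"
    have "act x h = act y (inv\<^bsub>G\<^esub> g \<otimes>\<^bsub>G\<^esub> h)"
      using g h assms act_mult grp
      by (metis group.inv_closed group.inv_solve_left' group.is_monoid monoid.m_closed)
    then show "act x h \<in> (\<lambda>g. act y g) ` carrier G"
      using g h grp by (simp add: group.inv_closed monoid.m_closed group.is_monoid)
  next
    fix h assume h: "h \<in> carrier G"
    have "act y h = act x (g \<otimes>\<^bsub>G\<^esub> h)" using g h assms act_mult by auto
    then show "act y h \<in> (\<lambda>g. act x g) ` carrier G"
      using g h grp by (simp add: monoid.m_closed group.is_monoid)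
  qed
qed

lemma pi_act: "x \<in> topspace X \<Longrightarrow> g \<in> carrier G \<Longrightarrow> orb (act x g) = orb x"
  using pi_eq act_top by metis

lemma pi_open:
  assumes "openin X U" shows "openin Q (orb ` U)"
  unfolding openin_Q
proof
  have U: "U \<subseteq> topspace X" using openin_subset[OF assms] .
  then show "orb ` U \<subseteq> orb ` topspace X" by blast
  have "{x \<in> topspace X. orb x \<in> orb ` U} = (\<Union>g\<in>carrier G. {x \<in> topspace X. act x g \<in> U})"
  proof safe
    fix x u assume x: "x \<in> topspace X" and u: "u \<in> U" "orb x = orb u"
    then obtain g where "g \<in> carrier G" "act x g = u" using pi_eq U by blast
    then show "x \<in> (\<Union>g\<in>carrier G. {x \<in> topspace X. act x g \<in> U})" using x u by blast
  next
    fix x g assume "x \<in> topspace X" "g \<in> carrier G" "act x g \<in> U"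
    then show "orb x \<in> orb ` U" using pi_act by (metis image_eqI)
  qed
  moreover have "openin X (\<Union>g\<in>carrier G. {x \<in> topspace X. act x g \<in> U})"
    using openin_continuous_map_preimage[OF act_cont assms] by blast
  ultimately show "openin X {x \<in> topspace X. orb x \<in> orb ` U}" by simp
qed

definition sheet :: "'a set \<Rightarrow> bool" where
  "sheet N \<longleftrightarrow> openin X N \<and> inj_on orb N"

lemma sheet_exists:
  assumes y: "y \<in> topspace X" shows "\<exists>N. sheet N \<and> y \<in> N"
proof -
  have "\<forall>g\<in>carrier G - {\<one>\<^bsub>G\<^esub>}. \<exists>AB. openin X (fst AB) \<and> openin X (snd AB) \<and> y \<in> fst AB \<and> act y g \<in> snd AB \<and> disjnt (fst AB) (snd AB)"
  proof
    fix g assume g: "g \<in> carrier G - {\<one>\<^bsub>G\<^esub>}"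
    then have "y \<noteq> act y g" using act_free y by force
    then obtain A B where "openin X A" "openin X B" "y \<in> A" "act y g \<in> B" "disjnt A B"
      using haus y act_top g unfolding Hausdorff_space_def by (metis DiffD1)
    then show "\<exists>AB. openin X (fst AB) \<and> openin X (snd AB) \<and> y \<in> fst AB \<and> act y g \<in> snd AB \<and> disjnt (fst AB) (snd AB)"
      by (intro exI[of _ "(A,B)"]) simp
  qed
  then obtain AB where AB: "\<And>g. g \<in> carrier G - {\<one>\<^bsub>G\<^esub>} \<Longrightarrow> openin X (fst (AB g)) \<and> openin X (snd (AB g)) \<and> y \<in> fst (AB g) \<and> act y g \<in> snd (AB g) \<and> disjnt (fst (AB g)) (snd (AB g))"
    by metis
  define N where "N = {x \<in> topspace X. \<forall>g\<in>carrier G - {\<one>\<^bsub>G\<^esub>}. x \<in> fst (AB g) \<and> act x g \<in> snd (AB g)}"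
  have "openin X N" unfolding N_def
  proof (rule openin_finite_all)
    show "finite (carrier G - {\<one>\<^bsub>G\<^esub>})" using fin by simp
    fix g assume g: "g \<in> carrier G - {\<one>\<^bsub>G\<^esub>}"
    have "{x \<in> topspace X. x \<in> fst (AB g) \<and> act x g \<in> snd (AB g)} = fst (AB g) \<inter> {x \<in> topspace X. act x g \<in> snd (AB g)}"
      using AB[OF g] openin_subset by blast
    moreover have "openin X {x \<in> topspace X. act x g \<in> snd (AB g)}"
      using openin_continuous_map_preimage[OF act_cont] AB[OF g] g by blast
    ultimately show "openin X {x \<in> topspace X. x \<in> fst (AB g) \<and> act x g \<in> snd (AB g)}"
      using AB[OF g] by auto
  qed
  moreover have "inj_on orb N"
  proof (rule inj_onI)
    fix u v assume u: "u \<in> N" and v: "v \<in> N" and e: "orb u = orb v"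
    then have ut: "u \<in> topspace X" "v \<in> topspace X" unfolding N_def by auto
    then obtain g where g: "g \<in> carrier G" "act u g = v" using pi_eq e by blast
    show "u = v"
    proof (cases "g = \<one>\<^bsub>G\<^esub>")
      case True then show ?thesis using g act_one ut by auto
    next
      case False
      then have gg: "g \<in> carrier G - {\<one>\<^bsub>G\<^esub>}" using g by simp
      then have "act u g \<in> snd (AB g)" "v \<in> fst (AB g)" using u v unfolding N_def by auto
      then show ?thesis using AB[OF gg] g unfolding disjnt_def by auto
    qed
  qed
  moreover have "y \<in> N" unfolding N_def using AB y by auto
  ultimately show ?thesis unfolding sheet_def by blast
qed

lemma sheet_translate:
  assumes N: "sheet N" and z: "z \<in> topspace X" "orb z \<in> orb ` N"
  shows "\<exists>N'. sheet N' \<and> z \<in> N' \<and> orb ` N \<subseteq> orb ` N'"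
proof -
  have NX: "N \<subseteq> topspace X" using N openin_subset unfolding sheet_def by blast
  obtain u where u: "u \<in> N" "orb z = orb u" using z by blast
  then obtain g where g: "g \<in> carrier G" "act z g = u" using pi_eq z NX by blast
  define N' where "N' = {w \<in> topspace X. act w g \<in> N}"
  have "openin X N'" unfolding N'_def
    using openin_continuous_map_preimage[OF act_cont[OF g(1)]] N unfolding sheet_def by blast
  moreover have "inj_on orb N'"
  proof (rule inj_onI)
    fix w1 w2 assume w: "w1 \<in> N'" "w2 \<in> N'" "orb w1 = orb w2"
    then have "orb (act w1 g) = orb (act w2 g)" using pi_act g unfolding N'_def by auto
    then have e: "act w1 g = act w2 g" using N w unfolding sheet_def N'_def inj_on_def by blast
    have "w1 = act (act w1 g) (inv\<^bsub>G\<^esub> g)" using act_inv g w by (simp add: N'_def)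
    also have "\<dots> = act (act w2 g) (inv\<^bsub>G\<^esub> g)" using e by simp
    also have "\<dots> = w2" using act_inv g w by (simp add: N'_def)
    finally show "w1 = w2" .
  qed
  moreover have "z \<in> N'" unfolding N'_def using z g u by auto
  moreover have "orb ` N \<subseteq> orb ` N'"
  proof
    fix ob assume "ob \<in> orb ` N"
    then obtain v where v: "v \<in> N" "ob = orb v" by blast
    define w where "w = act v (inv\<^bsub>G\<^esub> g)"
    have vt: "v \<in> topspace X" using v NX by blast
    have ig: "inv\<^bsub>G\<^esub> g \<in> carrier G" using g grp by (simp add: group.inv_closed)
    have "w \<in> topspace X" unfolding w_def using act_top vt ig by blast
    moreover have "act w g = v" unfolding w_def using act_inv' vt g by blast
    moreover have "orb w = orb v" unfolding w_def using pi_act vt ig by blast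
    ultimately have "w \<in> N'" "ob = orb w" unfolding N'_def using v by auto
    then show "ob \<in> orb ` N'" by blast
  qed
  ultimately show ?thesis unfolding sheet_def by blast
qed

lemma sheet_inv_cont:
  assumes N: "sheet N"
  shows "continuous_map (subtopology Q (orb ` N)) X (inv_into N orb)"
proof -
  have NX: "N \<subseteq> topspace X" using N openin_subset unfolding sheet_def by blast
  have ts: "topspace (subtopology Q (orb ` N)) = orb ` N"
    using NX by (auto simp: topspace_subtopology topspace_Q)
  show ?thesis
    unfolding continuous_map_def
  proof (intro conjI allI impI)
    show "inv_into N orb \<in> topspace (subtopology Q (orb ` N)) \<rightarrow> topspace X"
      unfolding ts using NX inv_into_into by (metis Pi_I subsetD)
  next
    fix U assume U: "openin X U"
    have eq: "{ob \<in> topspace (subtopology Q (orb ` N)). inv_into N orb ob \<in> U} = orb ` (N \<inter> U)"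
      unfolding ts
    proof (intro equalityI subsetI)
      fix ob assume "ob \<in> {ob \<in> orb ` N. inv_into N orb ob \<in> U}"
      then have "ob \<in> orb ` N" "inv_into N orb ob \<in> U" by auto
      then have "inv_into N orb ob \<in> N \<inter> U" "ob = orb (inv_into N orb ob)"
        by (auto simp: inv_into_into f_inv_into_f)
      then show "ob \<in> orb ` (N \<inter> U)" by blast
    next
      fix ob assume "ob \<in> orb ` (N \<inter> U)"
      then obtain u where u: "u \<in> N" "u \<in> U" "ob = orb u" by blast
      have "inv_into N orb (orb u) = u" using u N unfolding sheet_def by (simp add: inv_into_f_f)
      then show "ob \<in> {ob \<in> orb ` N. inv_into N orb ob \<in> U}" using u by auto
    qed
    have "openin Q (orb ` (N \<inter> U))" using pi_open N U unfolding sheet_def by blast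
    then have "openin (subtopology Q (orb ` N)) (orb ` (N \<inter> U) \<inter> orb ` N)"
      by (rule openin_subtopology_Int)
    moreover have "orb ` (N \<inter> U) \<inter> orb ` N = orb ` (N \<inter> U)" by blast
    ultimately show "openin (subtopology Q (orb ` N)) {ob \<in> topspace (subtopology Q (orb ` N)). inv_into N orb ob \<in> U}"
      unfolding eq by simp
  qed
qed

lemma sheet_inv_eq: "sheet N \<Longrightarrow> u \<in> N \<Longrightarrow> inv_into N orb (orb u) = u"
  unfolding sheet_def by (simp add: inv_into_f_f)

lemma sheet_inv_in: "ob \<in> orb ` N \<Longrightarrow> inv_into N orb ob \<in> N \<and> orb (inv_into N orb ob) = ob"
  by (simp add: inv_into_into f_inv_into_f)

end


lemma topspace_power_top: "topspace (power_top X n) = PiE {..<n} (\<lambda>_. topspace X)"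
  unfolding power_top_def by simp

lemma topspace_multipath:
  "topspace (multipath_space X n) = {\<alpha> \<in> PiE {..<n} (\<lambda>_. paths X). \<forall>i<n. \<forall>j<n. \<alpha> i 0 = \<alpha> j 0}"
  unfolding multipath_space_def by (simp add: topspace_power_top topspace_path_space, blast)

lemma mp_cont_power:
  "continuous_map T (multipath_space X n) s \<Longrightarrow> continuous_map T (power_top (path_space X) n) s"
  unfolding multipath_space_def using continuous_map_in_subtopology by blast

lemma mp_proj:
  assumes "continuous_map T (multipath_space X n) s" "i < n"
  shows "continuous_map T (path_space X) (\<lambda>b. s b i)"
proof -
  have "continuous_map T (power_top (path_space X) n) s" using mp_cont_power[OF assms(1)] .
  then show ?thesis unfolding power_top_def continuous_map_componentwise using assms(2) by auto
qed

lemma mp_top: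
  assumes "continuous_map T (multipath_space X n) s" "b \<in> topspace T"
  shows "\<forall>i<n. s b i \<in> paths X" "\<forall>i<n. \<forall>j<n. s b i 0 = s b j 0" "s b \<in> extensional {..<n}"
  using continuous_map_image_subset_topspace[OF assms(1)] assms(2) unfolding topspace_multipath
  by (auto simp: PiE_iff)

lemma mp_contI:
  assumes "\<And>i. i < n \<Longrightarrow> continuous_map T (path_space X) (\<lambda>b. s b i)"
    and "\<And>b. b \<in> topspace T \<Longrightarrow> s b \<in> extensional {..<n}"
    and "\<And>b i j. b \<in> topspace T \<Longrightarrow> i < n \<Longrightarrow> j < n \<Longrightarrow> s b i 0 = s b j 0"
  shows "continuous_map T (multipath_space X n) s"
proof -
  have c: "continuous_map T (power_top (path_space X) n) s"
    unfolding power_top_def continuous_map_componentwise using assms(1,2) by auto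
  have "s ` topspace T \<subseteq> {\<alpha> \<in> topspace (power_top (path_space X) n). \<forall>i<n. \<forall>j<n. \<alpha> i 0 = \<alpha> j 0}"
    using continuous_map_image_subset_topspace[OF c] assms(3) by auto
  then show ?thesis unfolding multipath_space_def continuous_map_in_subtopology using c by blast
qed

lemma disc_preimage:
  assumes "continuous_map T (discrete_topology S) H"
  shows "openin T {t \<in> topspace T. H t = a}"
proof -
  have "openin T {t \<in> topspace T. H t \<in> {a} \<inter> S}"
    by (rule openin_continuous_map_preimage[OF assms]) simp
  moreover have "{t \<in> topspace T. H t \<in> {a} \<inter> S} = {t \<in> topspace T. H t = a}"
    using continuous_map_image_subset_topspace[OF assms] by auto
  ultimately show ?thesis by simp
qed

lemma disc_cont2:
  assumes H1: "continuous_map T (discrete_topology S) H1" and H2: "continuous_map T (discrete_topology S) H2"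
    and phi: "\<And>a b. a \<in> S \<Longrightarrow> b \<in> S \<Longrightarrow> phi a b \<in> S'"
  shows "continuous_map T (discrete_topology S') (\<lambda>t. phi (H1 t) (H2 t))"
  unfolding continuous_map_def
proof (intro conjI allI impI)
  show "(\<lambda>t. phi (H1 t) (H2 t)) \<in> topspace T \<rightarrow> topspace (discrete_topology S')"
    using continuous_map_image_subset_topspace[OF H1] continuous_map_image_subset_topspace[OF H2] phi by auto
  fix U assume "openin (discrete_topology S') U"
  show "openin T {x \<in> topspace T. phi (H1 x) (H2 x) \<in> U}"
  proof (subst openin_subopen, intro ballI)
    fix t assume t: "t \<in> {x \<in> topspace T. phi (H1 x) (H2 x) \<in> U}"
    have "openin T ({x \<in> topspace T. H1 x = H1 t} \<inter> {x \<in> topspace T. H2 x = H2 t})"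
      using disc_preimage[OF H1] disc_preimage[OF H2] by blast
    then show "\<exists>T'. openin T T' \<and> t \<in> T' \<and> T' \<subseteq> {x \<in> topspace T. phi (H1 x) (H2 x) \<in> U}"
      using t by (intro exI[of _ "{x \<in> topspace T. H1 x = H1 t} \<inter> {x \<in> topspace T. H2 x = H2 t}"]) auto
  qed
qed

context fa
begin

lemma diff_locally_const:
  assumes F1: "continuous_map T X F1" and F2: "continuous_map T X F2"
    and eq: "\<And>t. t \<in> topspace T \<Longrightarrow> orb (F1 t) = orb (F2 t)"
  shows "\<exists>H. continuous_map T (discrete_topology (carrier G)) H \<and>
             (\<forall>t\<in>topspace T. H t \<in> carrier G \<and> act (F1 t) (H t) = F2 t)"
proof -
  define H where "H t = (SOME g. g \<in> carrier G \<and> act (F1 t) g = F2 t)" for t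
  have top1: "F1 t \<in> topspace X" and top2: "F2 t \<in> topspace X" if "t \<in> topspace T" for t
    using that continuous_map_image_subset_topspace[OF F1] continuous_map_image_subset_topspace[OF F2] by auto
  have Hp: "H t \<in> carrier G \<and> act (F1 t) (H t) = F2 t" if t: "t \<in> topspace T" for t
  proof -
    have "\<exists>g. g \<in> carrier G \<and> act (F1 t) g = F2 t" using pi_eq[OF top1[OF t] top2[OF t]] eq[OF t] by blast
    then show ?thesis unfolding H_def by (rule someI_ex)
  qed
  have "continuous_map T (discrete_topology (carrier G)) H"
    unfolding continuous_map_def
  proof (intro conjI allI impI)
    show "H \<in> topspace T \<rightarrow> topspace (discrete_topology (carrier G))" using Hp by auto
    fix U assume "openin (discrete_topology (carrier G)) U"
    show "openin T {x \<in> topspace T. H x \<in> U}"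
    proof (subst openin_subopen, intro ballI)
      fix t0 assume t0: "t0 \<in> {x \<in> topspace T. H x \<in> U}"
      then have t0T: "t0 \<in> topspace T" by simp
      define g where "g = H t0"
      have g: "g \<in> carrier G" "act (F1 t0) g = F2 t0" using Hp[OF t0T] unfolding g_def by auto
      obtain N where N: "sheet N" "F2 t0 \<in> N" using sheet_exists top2[OF t0T] by blast
      have NX: "openin X N" using N unfolding sheet_def by blast
      define Ob where "Ob = {t \<in> topspace T. F2 t \<in> N} \<inter> {t \<in> topspace T. F1 t \<in> {x \<in> topspace X. act x g \<in> N}}"
      have "openin T Ob" unfolding Ob_def
        by (intro openin_Int openin_continuous_map_preimage[OF F2 NX]
            openin_continuous_map_preimage[OF F1] openin_continuous_map_preimage[OF act_cont[OF g(1)] NX])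
      moreover have "t0 \<in> Ob" unfolding Ob_def using t0T top1 g N by auto
      moreover have "Ob \<subseteq> {x \<in> topspace T. H x \<in> U}"
      proof
        fix t assume t: "t \<in> Ob"
        then have tT: "t \<in> topspace T" unfolding Ob_def by simp
        have "orb (act (F1 t) g) = orb (F2 t)" using pi_act[OF top1[OF tT] g(1)] eq[OF tT] by simp
        moreover have "act (F1 t) g \<in> N" "F2 t \<in> N" using t unfolding Ob_def by auto
        ultimately have "act (F1 t) g = F2 t" using N(1) unfolding sheet_def inj_on_def by blast
        then have "act (F1 t) g = act (F1 t) (H t)" using Hp[OF tT] by simp
        then have "g = H t" using act_cancel top1[OF tT] g(1) Hp[OF tT] by blast
        then show "t \<in> {x \<in> topspace T. H x \<in> U}" using tT t0 unfolding g_def by simp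
      qed
      ultimately show "\<exists>T'. openin T T' \<and> t0 \<in> T' \<and> T' \<subseteq> {x \<in> topspace T. H x \<in> U}" by blast
    qed
  qed
  then show ?thesis using Hp by blast
qed

lemma act_path_cont:
  assumes A: "continuous_map T (path_space X) A" and H: "continuous_map T (discrete_topology (carrier G)) H"
  shows "continuous_map T (path_space X) (\<lambda>t. \<lambda>s\<in>{0..1}. act (A t s) (H t))"
proof (rule continuous_map_path_spaceI)
  have Hc: "H t \<in> carrier G" if "t \<in> topspace T" for t
    using continuous_map_image_subset_topspace[OF H] that by auto
  fix t assume t: "t \<in> topspace T"
  have "pcomp (\<lambda>x. act x (H t)) (A t) \<in> paths X"
    by (rule pcomp_paths[OF act_cont[OF Hc[OF t]] continuous_map_path_space_paths[OF A t]])
  then show "(\<lambda>s\<in>{0..1}. act (A t s) (H t)) \<in> paths X" unfolding pcomp_def by simp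
next
  have Hc: "H t \<in> carrier G" if "t \<in> topspace T" for t
    using continuous_map_image_subset_topspace[OF H] that by auto
  fix K :: "real set" and V assume KV: "compact K" "K \<subseteq> {0..1}" "openin X V"
  show "openin T {t \<in> topspace T. (\<lambda>s\<in>{0..1}. act (A t s) (H t)) ` K \<subseteq> V}"
  proof (subst openin_subopen, intro ballI)
    fix t0 assume t0: "t0 \<in> {t \<in> topspace T. (\<lambda>s\<in>{0..1}. act (A t s) (H t)) ` K \<subseteq> V}"
    then have t0T: "t0 \<in> topspace T" by simp
    define g where "g = H t0"
    have g: "g \<in> carrier G" using Hc[OF t0T] unfolding g_def .
    define Ob where "Ob = {t \<in> topspace T. H t = g} \<inter> {t \<in> topspace T. A t ` K \<subseteq> {x \<in> topspace X. act x g \<in> V}}"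
    have "openin T Ob" unfolding Ob_def
      by (intro openin_Int disc_preimage[OF H] continuous_map_path_space_preimage[OF A KV(1,2)]
          openin_continuous_map_preimage[OF act_cont[OF g] KV(3)])
    moreover have pt: "A t s \<in> topspace X" if "t \<in> topspace T" "s \<in> K" for t s
      using paths_topspace[OF continuous_map_path_space_paths[OF A that(1)]] KV(2) that(2) by auto
    have "t0 \<in> Ob" unfolding Ob_def using t0 t0T pt KV(2) unfolding g_def by (auto simp: subset_iff)
    moreover have "Ob \<subseteq> {t \<in> topspace T. (\<lambda>s\<in>{0..1}. act (A t s) (H t)) ` K \<subseteq> V}"
      unfolding Ob_def using KV(2) by (auto simp: subset_iff)
    ultimately show "\<exists>T'. openin T T' \<and> t0 \<in> T' \<and> T' \<subseteq> {t \<in> topspace T. (\<lambda>s\<in>{0..1}. act (A t s) (H t)) ` K \<subseteq> V}"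
      by blast
  qed
qed

lemma ineq3: "TC n Q \<le> TC_orb n X G act"
  unfolding TC_def TC_orb_def
proof (rule secat_le[where f = "\<lambda>x. x"])
  show "continuous_map (power_top Q n) (power_top Q n) (\<lambda>x. x)" by simp
  fix U s
  assume U: "openin (power_top Q n) U"
    and s: "continuous_map (subtopology (power_top Q n) U) (multipath_space X n) s"
    and se: "\<forall>b\<in>U. (\<lambda>i\<in>{..<n}. orb (s b i 1)) = b"
  have UU: "{b \<in> topspace (power_top Q n). b \<in> U} = U" using openin_subset[OF U] by auto
  have tU: "topspace (subtopology (power_top Q n) U) = U" using openin_subset[OF U] by auto
  define s' where "s' b = (\<lambda>i\<in>{..<n}. pcomp orb (s b i))" for b
  have "continuous_map (subtopology (power_top Q n) U) (multipath_space Q n) s'"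
  proof (rule mp_contI)
    fix i assume i: "i < n"
    have "continuous_map (subtopology (power_top Q n) U) (path_space Q) (pcomp orb \<circ> (\<lambda>b. s b i))"
      by (rule continuous_map_compose[OF mp_proj[OF s i] continuous_map_pcomp[OF pi_cont]])
    moreover have "(\<lambda>b. s' b i) = pcomp orb \<circ> (\<lambda>b. s b i)" unfolding s'_def o_def using i by simp
    ultimately show "continuous_map (subtopology (power_top Q n) U) (path_space Q) (\<lambda>b. s' b i)" by simp
  next
    fix b show "s' b \<in> extensional {..<n}" unfolding s'_def by simp
  next
    fix b i j assume b: "b \<in> topspace (subtopology (power_top Q n) U)" and ij: "i < n" "j < n"
    have "s b i 0 = s b j 0" using mp_top(2)[OF s b] ij by blast
    then show "s' b i 0 = s' b j 0" unfolding s'_def pcomp_def using ij by simp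
  qed
  moreover have "\<forall>b\<in>U. eval_end n (s' b) = b"
  proof
    fix b assume b: "b \<in> U"
    have "eval_end n (s' b) = (\<lambda>i\<in>{..<n}. orb (s b i 1))"
      unfolding eval_end_def s'_def pcomp_def by (rule ext) simp
    then show "eval_end n (s' b) = b" using se b by simp
  qed
  ultimately show "\<exists>s'. continuous_map (subtopology (power_top Q n) {b \<in> topspace (power_top Q n). b \<in> U}) (multipath_space Q n) s' \<and>
           (\<forall>b\<in>{b \<in> topspace (power_top Q n). b \<in> U}. eval_end n (s' b) = b)"
    unfolding UU by (intro exI[of _ s'] conjI)
qed

end


context fa
begin

lemma ineq1:
  assumes n: "n \<ge> 1"
  shows "TC_effv n X G act \<le> TC_effl n X G act"
  unfolding TC_effv_def TC_effl_def
proof (rule secat_le[where f = "\<lambda>x. (x 0, \<lambda>i\<in>{..<n - 1}. orb (x (Suc i)))"])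
  define f where "f = (\<lambda>x::nat\<Rightarrow>'a. (x 0, \<lambda>i\<in>{..<n - 1}. orb (x (Suc i))))"
  have fc: "continuous_map (power_top X n) (prod_topology X (power_top Q (n - 1))) f"
    unfolding f_def continuous_map_paired
  proof
    show "continuous_map (power_top X n) X (\<lambda>x. x 0)"
      unfolding power_top_def using continuous_map_product_projection[of 0 "{..<n}" "\<lambda>i. X"] n by simp
    show "continuous_map (power_top X n) (power_top Q (n - 1)) (\<lambda>x. \<lambda>i\<in>{..<n - 1}. orb (x (Suc i)))"
      unfolding power_top_def continuous_map_componentwise
    proof (intro conjI ballI)
      fix k assume k: "k \<in> {..<n - 1}"
      have "continuous_map (product_topology (\<lambda>i. X) {..<n}) Q (orb \<circ> (\<lambda>x. x (Suc k)))"
        by (rule continuous_map_compose[OF continuous_map_product_projection[of "Suc k" "{..<n}" "\<lambda>i. X", simplified] pi_cont]) (use k in auto)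
      then show "continuous_map (product_topology (\<lambda>i. X) {..<n}) Q (\<lambda>x. (\<lambda>i\<in>{..<n - 1}. orb (x (Suc i))) k)"
        using k by (simp add: o_def)
    qed auto
  qed
  then show "continuous_map (power_top X n) (prod_topology X (power_top Q (n - 1))) (\<lambda>x. (x 0, \<lambda>i\<in>{..<n - 1}. orb (x (Suc i))))"
    unfolding f_def .
  fix U s
  assume U: "openin (prod_topology X (power_top Q (n - 1))) U"
    and s: "continuous_map (subtopology (prod_topology X (power_top Q (n - 1))) U) (multipath_space X n) s"
    and se: "\<forall>b\<in>U. (s b 0 1, \<lambda>i\<in>{..<n - 1}. orb (s b (Suc i) 1)) = b"
  define V where "V = {x \<in> topspace (power_top X n). f x \<in> U}"
  define T where "T = subtopology (power_top X n) V"
  have tT: "topspace T = V" unfolding T_def V_def by auto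
  have fT: "continuous_map T (subtopology (prod_topology X (power_top Q (n - 1))) U) f"
    unfolding T_def continuous_map_in_subtopology
    using continuous_map_from_subtopology[OF fc] unfolding V_def by auto
  have sf: "continuous_map T (multipath_space X n) (\<lambda>x. s (f x))"
    using continuous_map_compose[OF fT s] by (simp add: o_def)
  have sfe: "s (f x) 0 1 = x 0" "\<And>k. k < n - 1 \<Longrightarrow> orb (s (f x) (Suc k) 1) = orb (x (Suc k))" if x: "x \<in> V" for x
  proof -
    have fU: "f x \<in> U" using x unfolding V_def by simp
    have e: "(s (f x) 0 1, \<lambda>i\<in>{..<n - 1}. orb (s (f x) (Suc i) 1)) = f x" using se fU by blast
    then show "s (f x) 0 1 = x 0" unfolding f_def by simp
    fix k assume k: "k < n - 1"
    have "(\<lambda>i\<in>{..<n - 1}. orb (s (f x) (Suc i) 1)) k = (\<lambda>i\<in>{..<n - 1}. orb (x (Suc i))) k"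
      using e unfolding f_def by simp
    then show "orb (s (f x) (Suc k) 1) = orb (x (Suc k))" using k by simp
  qed
  have xtop: "x i \<in> topspace X" if "x \<in> V" "i < n" for x i
    using that unfolding V_def topspace_power_top by (auto simp: PiE_iff)
  have "\<forall>i<n. \<exists>H. continuous_map T (discrete_topology (carrier G)) H \<and>
             (\<forall>x\<in>topspace T. H x \<in> carrier G \<and> act (s (f x) i 1) (H x) = x i)"
  proof (intro allI impI)
    fix i assume i: "i < n"
    show "\<exists>H. continuous_map T (discrete_topology (carrier G)) H \<and>
             (\<forall>x\<in>topspace T. H x \<in> carrier G \<and> act (s (f x) i 1) (H x) = x i)"
    proof (rule diff_locally_const)
      show "continuous_map T X (\<lambda>x. s (f x) i 1)"
        using continuous_map_compose[OF mp_proj[OF sf i] continuous_map_eval[of 1]] by (simp add: o_def)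
      have "continuous_map (power_top X n) X (\<lambda>x. x i)"
        unfolding power_top_def using continuous_map_product_projection[of i "{..<n}" "\<lambda>i. X"] i by simp
      then show "continuous_map T X (\<lambda>x. x i)" unfolding T_def by (rule continuous_map_from_subtopology)
      fix x assume "x \<in> topspace T"
      then have x: "x \<in> V" using tT by simp
      show "orb (s (f x) i 1) = orb (x i)"
      proof (cases i)
        case 0 then show ?thesis using sfe(1)[OF x] by simp
      next
        case (Suc k) then show ?thesis using sfe(2)[OF x, of k] i by simp
      qed
    qed
  qed
  then obtain HH where HH: "\<And>i. i < n \<Longrightarrow> continuous_map T (discrete_topology (carrier G)) (HH i) \<and>
             (\<forall>x\<in>topspace T. HH i x \<in> carrier G \<and> act (s (f x) i 1) (HH i x) = x i)"
    by metis
  define s' where "s' x = ((\<lambda>i\<in>{..<n}. \<lambda>t\<in>{0..1}. act (s (f x) i t) (HH i x)),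
                           (\<lambda>i\<in>{..<n - 1}. inv\<^bsub>G\<^esub> (HH i x) \<otimes>\<^bsub>G\<^esub> HH (Suc i) x))" for x
  interpret G: group G by (rule grp)
  have c1: "continuous_map T (power_top (path_space X) n) (\<lambda>x. fst (s' x))"
    unfolding power_top_def continuous_map_componentwise
  proof (intro conjI ballI)
    fix i assume i: "i \<in> {..<n}"
    have "continuous_map T (path_space X) (\<lambda>x. \<lambda>t\<in>{0..1}. act (s (f x) i t) (HH i x))"
      by (rule act_path_cont[OF mp_proj[OF sf] conjunct1[OF HH]]) (use i in auto)
    then show "continuous_map T (path_space X) (\<lambda>x. fst (s' x) i)" unfolding s'_def using i by simp
  qed (auto simp: s'_def)
  have c2: "continuous_map T (power_top (discrete_topology (carrier G)) (n - 1)) (\<lambda>x. snd (s' x))"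
    unfolding power_top_def continuous_map_componentwise
  proof (intro conjI ballI)
    fix i assume i: "i \<in> {..<n - 1}"
    have "continuous_map T (discrete_topology (carrier G)) (\<lambda>x. inv\<^bsub>G\<^esub> (HH i x) \<otimes>\<^bsub>G\<^esub> HH (Suc i) x)"
      by (rule disc_cont2[OF conjunct1[OF HH] conjunct1[OF HH]]) (use i in auto)
    then show "continuous_map T (discrete_topology (carrier G)) (\<lambda>x. snd (s' x) i)" unfolding s'_def using i by simp
  qed (auto simp: s'_def)
  have c12: "continuous_map T (prod_topology (power_top (path_space X) n) (power_top (discrete_topology (carrier G)) (n - 1))) s'"
    unfolding continuous_map_pairwise o_def using c1 c2 by simp
  have cond: "act (fst (s' x) i 0) (snd (s' x) i) = fst (s' x) (Suc i) 0" if x: "x \<in> topspace T" and i: "i < n - 1" for x i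
  proof -
    have i1: "i < n" "Suc i < n" using i by auto
    have H1: "HH i x \<in> carrier G" "HH (Suc i) x \<in> carrier G" using HH[OF i1(1)] HH[OF i1(2)] x by auto
    have e0: "s (f x) i 0 = s (f x) (Suc i) 0" using mp_top(2)[OF sf x] i1 by blast
    have c0: "s (f x) i 0 \<in> topspace X" using mp_top(1)[OF sf x] i1 paths_topspace by fastforce
    have "act (fst (s' x) i 0) (snd (s' x) i) = act (act (s (f x) i 0) (HH i x)) (inv\<^bsub>G\<^esub> (HH i x) \<otimes>\<^bsub>G\<^esub> HH (Suc i) x)"
      unfolding s'_def using i1 i by simp
    also have "\<dots> = act (s (f x) i 0) (HH i x \<otimes>\<^bsub>G\<^esub> (inv\<^bsub>G\<^esub> (HH i x) \<otimes>\<^bsub>G\<^esub> HH (Suc i) x))"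
      using act_mult c0 H1 by simp
    also have "HH i x \<otimes>\<^bsub>G\<^esub> (inv\<^bsub>G\<^esub> (HH i x) \<otimes>\<^bsub>G\<^esub> HH (Suc i) x) = HH (Suc i) x"
      using H1 by (simp add: G.m_assoc[symmetric])
    also have "act (s (f x) i 0) (HH (Suc i) x) = fst (s' x) (Suc i) 0"
      unfolding s'_def using i1 e0 by simp
    finally show ?thesis .
  qed
  have sc: "continuous_map T (multipath_G_space X G act n) s'"
    unfolding multipath_G_space_def Let_def continuous_map_in_subtopology
    apply (rule conjI[OF c12])
    apply (rule Pi_I)
    subgoal for x
      using continuous_map_image_subset_topspace[OF c12] cond[of x]
      by (auto simp: case_prod_beta mem_Times_iff)
    done
  have seq: "(\<lambda>(\<alpha>, g). eval_end n \<alpha>) (s' x) = x" if x: "x \<in> V" for x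
  proof -
    have xe: "x \<in> extensional {..<n}" using x unfolding V_def topspace_power_top by (auto simp: PiE_iff)
    show ?thesis
    proof (rule ext)
      fix i show "(\<lambda>(\<alpha>, g). eval_end n \<alpha>) (s' x) i = x i"
      proof (cases "i < n")
        case True
        then show ?thesis using HH[OF True] x tT unfolding s'_def eval_end_def by simp
      next
        case False
        then show ?thesis using xe unfolding s'_def eval_end_def extensional_def by simp
      qed
    qed
  qed
  show "\<exists>s'. continuous_map (subtopology (power_top X n) {b \<in> topspace (power_top X n). (b 0, \<lambda>i\<in>{..<n - 1}. orb (b (Suc i))) \<in> U})
               (multipath_G_space X G act n) s' \<and>
           (\<forall>b\<in>{b \<in> topspace (power_top X n). (b 0, \<lambda>i\<in>{..<n - 1}. orb (b (Suc i))) \<in> U}. (\<lambda>(\<alpha>, g). eval_end n \<alpha>) (s' b) = b)"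
    using sc seq unfolding T_def V_def f_def by blast
qed

end


lemma path_partition:
  fixes f :: "real \<Rightarrow> 'b"
  assumes f: "continuous_map (top_of_set {0..1}) Y f"
    and cov: "\<And>t. t \<in> {0..1} \<Longrightarrow> \<exists>N. P N \<and> openin Y N \<and> f t \<in> N"
  shows "\<exists>m>0. \<forall>j<m. \<exists>N. P N \<and> openin Y N \<and> f ` {real j / real m .. real (Suc j) / real m} \<subseteq> N"
proof -
  define C where "C = {W. open W \<and> (\<exists>N. P N \<and> openin Y N \<and> (\<forall>t\<in>{0..1} \<inter> W. f t \<in> N))}"
  have cover: "{0..1} \<subseteq> \<Union>C"
  proof
    fix t :: real assume t: "t \<in> {0..1}"
    obtain N where N: "P N" "openin Y N" "f t \<in> N" using cov[OF t] by blast
    have "openin (top_of_set {0..1}) {s \<in> topspace (top_of_set {0..1}). f s \<in> N}"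
      by (rule openin_continuous_map_preimage[OF f N(2)])
    then have "openin (top_of_set {0..1}) {s \<in> {0..1}. f s \<in> N}" by simp
    then obtain W where W: "open W" "{s \<in> {0..1}. f s \<in> N} = {0..1} \<inter> W"
      unfolding openin_open by blast
    have "W \<in> C" unfolding C_def using W N by blast
    moreover have "t \<in> W" using W t N by blast
    ultimately show "t \<in> \<Union>C" by blast
  qed
  have "C \<noteq> {}" using cover by auto
  then obtain d where d: "0 < d" "\<And>T. T \<subseteq> {0..1} \<Longrightarrow> diameter T < d \<Longrightarrow> \<exists>B\<in>C. T \<subseteq> B"
    using Lebesgue_number_lemma[OF compact_Icc _ cover] unfolding C_def by blast
  obtain m' where m': "inverse (real (Suc m')) < d" using reals_Archimedean[OF d(1)] by blast
  define m where "m = Suc m'"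
  have "\<forall>j<m. \<exists>N. P N \<and> openin Y N \<and> f ` {real j / real m .. real (Suc j) / real m} \<subseteq> N"
  proof (intro allI impI)
    fix j assume j: "j < m"
    have mpos: "real m > 0" unfolding m_def by simp
    have sub: "{real j / real m .. real (Suc j) / real m} \<subseteq> {0..1}"
      using j mpos by (auto simp: divide_simps)
    have "real (Suc j) / real m - real j / real m = inverse (real m)"
      using mpos by (simp add: divide_simps)
    then have "diameter {real j / real m .. real (Suc j) / real m} < d"
      using m' mpos unfolding m_def by (simp add: divide_simps)
    then obtain W where W: "W \<in> C" "{real j / real m .. real (Suc j) / real m} \<subseteq> W" using d(2)[OF sub] by blast
    then obtain N where N: "P N" "openin Y N" "\<forall>t\<in>{0..1} \<inter> W. f t \<in> N" unfolding C_def by blast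
    show "\<exists>N. P N \<and> openin Y N \<and> f ` {real j / real m .. real (Suc j) / real m} \<subseteq> N"
      using N W sub by blast
  qed
  then show ?thesis unfolding m_def by blast
qed

lemma interval_cover:
  assumes "s \<in> {0..1::real}" "m > (0::nat)"
  shows "\<exists>j<m. s \<in> {real j / real m .. real (Suc j) / real m}"
proof (cases "s = 1")
  case True
  then show ?thesis using assms by (intro exI[of _ "m - 1"]) (auto simp: divide_simps of_nat_diff)
next
  case False
  define j where "j = nat \<lfloor>s * real m\<rfloor>"
  have s: "0 \<le> s" "s < 1" using assms False by auto
  have fl: "real j \<le> s * real m" "s * real m < real j + 1"
    unfolding j_def using s assms by (auto simp: of_nat_nat)
  have "real j < real m" using fl s assms
    by (smt (verit) mult_less_cancel_right2 of_nat_0_less_iff)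
  then have "j < m" by simp
  moreover have "s \<in> {real j / real m .. real (Suc j) / real m}"
    using fl assms by (auto simp: divide_simps)
  ultimately show ?thesis by blast
qed

context fa
begin

lemma unique_lift:
  fixes a b :: real
  assumes ab: "a \<le> b" and f1: "continuous_map (top_of_set {a..b}) X f1" and f2: "continuous_map (top_of_set {a..b}) X f2"
    and eq: "\<And>t. t \<in> {a..b} \<Longrightarrow> orb (f1 t) = orb (f2 t)" and st: "f1 a = f2 a"
  shows "\<And>t. t \<in> {a..b} \<Longrightarrow> f1 t = f2 t"
proof -
  define A where "A = {t \<in> topspace (top_of_set {a..b}). f1 t = f2 t}"
  have cl: "closedin (top_of_set {a..b}) A" unfolding A_def
    by (rule closedin_continuous_maps_eq[OF haus f1 f2])
  have op: "openin (top_of_set {a..b}) A"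
  proof (subst openin_subopen, intro ballI)
    fix t assume t: "t \<in> A"
    then have tab: "t \<in> {a..b}" unfolding A_def by simp
    have "f1 t \<in> topspace X" using continuous_map_image_subset_topspace[OF f1] tab by auto
    then obtain N where N: "sheet N" "f1 t \<in> N" using sheet_exists by blast
    have No: "openin X N" using N unfolding sheet_def by blast
    define Ob where "Ob = {s \<in> topspace (top_of_set {a..b}). f1 s \<in> N} \<inter> {s \<in> topspace (top_of_set {a..b}). f2 s \<in> N}"
    have "openin (top_of_set {a..b}) Ob" unfolding Ob_def
      by (intro openin_Int openin_continuous_map_preimage[OF f1 No] openin_continuous_map_preimage[OF f2 No])
    moreover have "t \<in> Ob" unfolding Ob_def using t N tab unfolding A_def by auto
    moreover have "Ob \<subseteq> A"
    proof
      fix s assume s: "s \<in> Ob"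
      then have "s \<in> {a..b}" unfolding Ob_def by simp
      then have "orb (f1 s) = orb (f2 s)" using eq by blast
      moreover have "f1 s \<in> N" "f2 s \<in> N" using s unfolding Ob_def by auto
      ultimately have "f1 s = f2 s" using N(1) unfolding sheet_def inj_on_def by blast
      then show "s \<in> A" using s unfolding A_def Ob_def by simp
    qed
    ultimately show "\<exists>T. openin (top_of_set {a..b}) T \<and> t \<in> T \<and> T \<subseteq> A" by blast
  qed
  have "a \<in> A" unfolding A_def using ab st by simp
  moreover have "A = {} \<or> A = {a..b}"
    using connected_clopen[THEN iffD1, OF connected_Icc[of a b], rule_format, OF conjI[OF op cl]] .
  ultimately have "A = {a..b}" by blast
  then show "f1 t = f2 t" if "t \<in> {a..b}" for t
  proof -
    have "t \<in> A" using that \<open>A = {a..b}\<close> by simp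
    then show ?thesis by (simp add: A_def)
  qed
qed

lemma beta_sub_cont:
  assumes "continuous_map (top_of_set S) Q beta" "T \<subseteq> S" "beta ` T \<subseteq> orb ` N" "sheet N"
  shows "continuous_map (top_of_set T) X (\<lambda>t. inv_into N orb (beta t))"
proof -
  have "continuous_map (top_of_set T) Q beta"
    using continuous_map_from_subtopology_mono[OF assms(1,2)] .
  then have "continuous_map (top_of_set T) (subtopology Q (orb ` N)) beta"
    unfolding continuous_map_in_subtopology using assms(3) by auto
  then show ?thesis using continuous_map_compose[OF _ sheet_inv_cont[OF assms(4)]] by (simp add: o_def)
qed

lemma lift_exists:
  assumes beta: "pathin Q beta" and x: "x \<in> topspace X" "orb x = beta 0"
  shows "\<exists>f. pathin X f \<and> f 0 = x \<and> (\<forall>t\<in>{0..1}. orb (f t) = beta t)"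
proof -
  have bc: "continuous_map (top_of_set {0..1}) Q beta" using beta unfolding pathin_def .
  have "\<exists>m>0. \<forall>j<m. \<exists>N. (\<exists>S. sheet S \<and> N = orb ` S) \<and> openin Q N \<and> beta ` {real j / real m .. real (Suc j) / real m} \<subseteq> N"
  proof (rule path_partition[OF bc])
    fix t :: real assume t: "t \<in> {0..1}"
    have "beta t \<in> topspace Q" using continuous_map_image_subset_topspace[OF bc] t by auto
    then obtain y where y: "y \<in> topspace X" "beta t = orb y" unfolding topspace_Q by blast
    obtain S where S: "sheet S" "y \<in> S" using sheet_exists[OF y(1)] by blast
    have "openin Q (orb ` S)" using pi_open S(1) unfolding sheet_def by blast
    then show "\<exists>N. (\<exists>S. sheet S \<and> N = orb ` S) \<and> openin Q N \<and> beta t \<in> N"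
      using S y by (intro exI[of _ "orb ` S"]) auto
  qed
  then obtain m where m: "m > 0"
    and part0: "\<forall>j<m. \<exists>N. (\<exists>S. sheet S \<and> N = orb ` S) \<and> openin Q N \<and> beta ` {real j / real m .. real (Suc j) / real m} \<subseteq> N"
    by blast
  have part: "\<exists>S. sheet S \<and> beta ` {real j / real m .. real (Suc j) / real m} \<subseteq> orb ` S" if j: "j < m" for j
  proof -
    obtain N S where "sheet S" "N = orb ` S" "beta ` {real j / real m .. real (Suc j) / real m} \<subseteq> N"
      using part0 j by blast
    then show ?thesis by blast
  qed
  have mpos: "real m > 0" using m by simp
  have ind: "\<exists>f. continuous_map (top_of_set {0 .. real k / real m}) X f \<and> f 0 = x \<and>
          (\<forall>t\<in>{0 .. real k / real m}. orb (f t) = beta t)" if "k \<le> m" for k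
    using that
  proof (induction k)
    case 0
    show ?case
      by (rule exI[of _ "\<lambda>_. x"]) (use x in auto)
  next
    case (Suc k)
    then obtain f where f: "continuous_map (top_of_set {0 .. real k / real m}) X f" "f 0 = x"
      "\<forall>t\<in>{0 .. real k / real m}. orb (f t) = beta t" by auto
    have k: "k < m" using Suc.prems by simp
    define a where "a = real k / real m"
    define b where "b = real (Suc k) / real m"
    have ab: "0 \<le> a" "a \<le> b" "b \<le> 1" unfolding a_def b_def using k mpos by (auto simp: divide_simps)
    obtain S where S: "sheet S" "beta ` {a..b} \<subseteq> orb ` S" using part[OF k] unfolding a_def b_def by blast
    have a_in: "a \<in> {0..a}" using ab by simp
    define z where "z = f a"
    have z: "z \<in> topspace X" unfolding z_def using continuous_map_image_subset_topspace[OF f(1)] a_in a_def by auto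
    have "orb z = beta a" unfolding z_def using f(3) a_in a_def by auto
    then have "orb z \<in> orb ` S" using S ab by auto
    then obtain N' where N': "sheet N'" "z \<in> N'" "orb ` S \<subseteq> orb ` N'" using sheet_translate[OF S(1) z] by blast
    have bN: "beta ` {a..b} \<subseteq> orb ` N'" using S N' by blast
    have sc: "continuous_map (top_of_set {a..b}) X (\<lambda>t. inv_into N' orb (beta t))"
      by (rule beta_sub_cont[OF bc _ bN N'(1)]) (use ab in auto)
    define f' where "f' t = (if t \<le> a then f t else inv_into N' orb (beta t))" for t
    have "continuous_map (top_of_set {0..b}) X f'"
      unfolding f'_def
    proof (rule continuous_map_cases_le)
      show "continuous_map (top_of_set {0..b}) euclideanreal (\<lambda>x. x)" by simp
      show "continuous_map (top_of_set {0..b}) euclideanreal (\<lambda>x. a)" by simp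
      have fa: "continuous_map (top_of_set {0..a}) X f" using f(1) unfolding a_def .
      have e1: "{0..b} \<inter> {x \<in> topspace (top_of_set {0..b}). x \<le> a} = {0..a}" using ab by auto
      show "continuous_map (subtopology (top_of_set {0..b}) {x \<in> topspace (top_of_set {0..b}). x \<le> a}) X f"
        by (simp only: subtopology_subtopology e1 fa)
      have e2: "{0..b} \<inter> {x \<in> topspace (top_of_set {0..b}). a \<le> x} = {a..b}" using ab by auto
      show "continuous_map (subtopology (top_of_set {0..b}) {x \<in> topspace (top_of_set {0..b}). a \<le> x}) X (\<lambda>t. inv_into N' orb (beta t))"
        by (simp only: subtopology_subtopology e2 sc)
      have "inv_into N' orb (orb z) = z" using sheet_inv_eq[OF N'(1,2)] .
      then have iz: "inv_into N' orb (beta a) = z" using \<open>orb z = beta a\<close> by simp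
      fix t assume "t \<in> topspace (top_of_set {0..b})" "t = a"
      then show "f t = inv_into N' orb (beta t)"
        using iz unfolding z_def by simp
    qed
    moreover have "f' 0 = x" unfolding f'_def using ab f(2) by simp
    moreover have "\<forall>t\<in>{0..b}. orb (f' t) = beta t"
    proof
      fix t assume t: "t \<in> {0..b}"
      show "orb (f' t) = beta t"
      proof (cases "t \<le> a")
        case True then show ?thesis unfolding f'_def using f(3) t a_def by auto
      next
        case False
        then have "beta t \<in> orb ` N'" using bN t by auto
        then show ?thesis unfolding f'_def using False sheet_inv_in by simp
      qed
    qed
    ultimately show ?case unfolding b_def by blast
  qed
  have mm: "real m / real m = 1" using mpos by simp
  have "\<exists>f. continuous_map (top_of_set {0..1}) X f \<and> f 0 = x \<and> (\<forall>t\<in>{0..1}. orb (f t) = beta t)"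
    using ind[OF order_refl] unfolding mm .
  then show ?thesis unfolding pathin_def by blast
qed

definition lift :: "(real \<Rightarrow> 'a set) \<Rightarrow> 'a \<Rightarrow> real \<Rightarrow> 'a" where
  "lift beta x = (\<lambda>t\<in>{0..1}. (SOME f. pathin X f \<and> f 0 = x \<and> (\<forall>t\<in>{0..1}. orb (f t) = beta t)) t)"

lemma lift_props:
  assumes "beta \<in> paths Q" "x \<in> topspace X" "orb x = beta 0"
  shows "lift beta x \<in> paths X" "lift beta x 0 = x" "\<And>t. t \<in> {0..1} \<Longrightarrow> orb (lift beta x t) = beta t"
proof -
  have pb: "pathin Q beta" using assms(1) unfolding paths_def by simp
  define g where "g = (SOME f. pathin X f \<and> f 0 = x \<and> (\<forall>t\<in>{0..1}. orb (f t) = beta t))"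
  have g: "pathin X g \<and> g 0 = x \<and> (\<forall>t\<in>{0..1}. orb (g t) = beta t)"
    unfolding g_def by (rule someI_ex[OF lift_exists[OF pb assms(2,3)]])
  have lg: "lift beta x = restrict g {0..1}" unfolding lift_def g_def by simp
  have "pathin X (restrict g {0..1})" using g unfolding pathin_def
    by (auto intro: continuous_map_eq)
  then show "lift beta x \<in> paths X" unfolding lg paths_def by simp
  show "lift beta x 0 = x" unfolding lg using g by simp
  show "orb (lift beta x t) = beta t" if "t \<in> {0..1}" for t unfolding lg using g that by simp
qed

lemma lift_cont:
  assumes B: "continuous_map T (path_space Q) B" and Z: "continuous_map T X Z"
    and e: "\<And>t. t \<in> topspace T \<Longrightarrow> orb (Z t) = B t 0"
  shows "continuous_map T (path_space X) (\<lambda>t. lift (B t) (Z t))"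
proof (rule continuous_map_path_spaceI)
  have Bp: "B t \<in> paths Q" if "t \<in> topspace T" for t using continuous_map_path_space_paths[OF B that] .
  have Zt: "Z t \<in> topspace X" if "t \<in> topspace T" for t using continuous_map_image_subset_topspace[OF Z] that by blast
  fix t assume t: "t \<in> topspace T"
  show "lift (B t) (Z t) \<in> paths X" using lift_props(1)[OF Bp[OF t] Zt[OF t] e[OF t]] .
next
  have Bp: "B t \<in> paths Q" if "t \<in> topspace T" for t using continuous_map_path_space_paths[OF B that] .
  have Zt: "Z t \<in> topspace X" if "t \<in> topspace T" for t using continuous_map_image_subset_topspace[OF Z] that by blast
  have Bc: "continuous_map (top_of_set {0..1}) Q (B t)" if "t \<in> topspace T" for t
    using Bp[OF that] unfolding paths_def pathin_def by simp
  fix K :: "real set" and V assume KV: "compact K" "K \<subseteq> {0..1}" "openin X V"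
  show "openin T {t \<in> topspace T. lift (B t) (Z t) ` K \<subseteq> V}"
  proof (subst openin_subopen, intro ballI)
    fix t0 assume t0: "t0 \<in> {t \<in> topspace T. lift (B t) (Z t) ` K \<subseteq> V}"
    then have t0T: "t0 \<in> topspace T" and fK: "lift (B t0) (Z t0) ` K \<subseteq> V" by auto
    define f where "f = lift (B t0) (Z t0)"
    have fp: "f \<in> paths X" "f 0 = Z t0" "\<And>s. s \<in> {0..1} \<Longrightarrow> orb (f s) = B t0 s"
      unfolding f_def using lift_props[OF Bp[OF t0T] Zt[OF t0T] e[OF t0T]] by auto
    have fc: "continuous_map (top_of_set {0..1}) X f" using fp(1) unfolding paths_def pathin_def by simp
    have "\<exists>m>0. \<forall>j<m. \<exists>N. sheet N \<and> openin X N \<and> f ` {real j / real m .. real (Suc j) / real m} \<subseteq> N"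
    proof (rule path_partition[OF fc])
      fix s :: real assume "s \<in> {0..1}"
      then have "f s \<in> topspace X" using paths_topspace[OF fp(1)] by blast
      then obtain N where "sheet N" "f s \<in> N" using sheet_exists by blast
      then show "\<exists>N. sheet N \<and> openin X N \<and> f s \<in> N" unfolding sheet_def by blast
    qed
    then obtain m where m: "m > 0" and part0: "\<forall>j<m. \<exists>N. sheet N \<and> openin X N \<and> f ` {real j / real m .. real (Suc j) / real m} \<subseteq> N"
      by blast
    have mpos: "real m > 0" using m by simp
    define I where "I j = {real j / real m .. real (Suc j) / real m}" for j
    define N where "N j = (if j < m then (SOME N. sheet N \<and> openin X N \<and> f ` I j \<subseteq> N) else {})" for j
    have Nj: "sheet (N j) \<and> f ` I j \<subseteq> N j" if "j < m" for j
    proof -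
      have "\<exists>N. sheet N \<and> openin X N \<and> f ` I j \<subseteq> N" using part0 that unfolding I_def by blast
      from someI_ex[OF this] show ?thesis unfolding N_def using that by simp
    qed
    have Nsheet: "sheet (N j)" for j
    proof (cases "j < m")
      case True then show ?thesis using Nj by blast
    next
      case False then show ?thesis unfolding N_def sheet_def by simp
    qed
    have Nopen: "openin X (N j)" for j using Nsheet[of j] unfolding sheet_def by blast
    have Isub: "I j \<subseteq> {0..1}" if "j < m" for j
      unfolding I_def using that mpos by (auto simp: divide_simps)
    have Ile: "real j / real m \<le> real (Suc j) / real m" for j
      using mpos by (simp add: divide_simps)
    have Ileft: "real j / real m \<in> I j" for j unfolding I_def using Ile by simp
    have Iright: "real (Suc j) / real m \<in> I j" for j unfolding I_def using Ile by simp
    define J where "J j = (if Suc j < m then {real (Suc j) / real m} else {})" for j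
    have Jsub: "J j \<subseteq> {0..1}" for j unfolding J_def using mpos by (auto simp: divide_simps)
    define Ob where "Ob = {t \<in> topspace T. Z t \<in> N 0} \<inter>
      {t \<in> topspace T. \<forall>j\<in>{..<m}. B t ` I j \<subseteq> orb ` N j \<and> B t ` (I j \<inter> K) \<subseteq> orb ` (N j \<inter> V) \<and>
                                       B t ` J j \<subseteq> orb ` (N j \<inter> N (Suc j))}"
    have oQ: "openin Q (orb ` S)" if "openin X S" for S using pi_open that .
    have "openin T Ob" unfolding Ob_def
    proof (rule openin_Int)
      show "openin T {t \<in> topspace T. Z t \<in> N 0}" by (rule openin_continuous_map_preimage[OF Z Nopen])
      show "openin T {t \<in> topspace T. \<forall>j\<in>{..<m}. B t ` I j \<subseteq> orb ` N j \<and> B t ` (I j \<inter> K) \<subseteq> orb ` (N j \<inter> V) \<and>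
                                       B t ` J j \<subseteq> orb ` (N j \<inter> N (Suc j))}"
      proof (rule openin_finite_all)
        fix j assume j: "j \<in> {..<m}"
        have cI: "compact (I j)" unfolding I_def by simp
        have cIK: "compact (I j \<inter> K)" unfolding I_def by (rule closed_Int_compact[OF closed_atLeastAtMost KV(1)])
        have cJ: "compact (J j)" unfolding J_def by simp
        have IKsub: "I j \<inter> K \<subseteq> {0..1}" using Isub j by auto
        have o1: "openin T {t \<in> topspace T. B t ` I j \<subseteq> orb ` N j}"
          by (rule continuous_map_path_space_preimage[OF B cI Isub oQ[OF Nopen]]) (use j in simp)
        have o2: "openin T {t \<in> topspace T. B t ` (I j \<inter> K) \<subseteq> orb ` (N j \<inter> V)}"
          by (rule continuous_map_path_space_preimage[OF B cIK IKsub oQ[OF openin_Int[OF Nopen KV(3)]]])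
        have o3: "openin T {t \<in> topspace T. B t ` J j \<subseteq> orb ` (N j \<inter> N (Suc j))}"
          by (rule continuous_map_path_space_preimage[OF B cJ Jsub oQ[OF openin_Int[OF Nopen Nopen]]])
        have "{t \<in> topspace T. B t ` I j \<subseteq> orb ` N j \<and> B t ` (I j \<inter> K) \<subseteq> orb ` (N j \<inter> V) \<and>
                                       B t ` J j \<subseteq> orb ` (N j \<inter> N (Suc j))} =
              {t \<in> topspace T. B t ` I j \<subseteq> orb ` N j} \<inter> {t \<in> topspace T. B t ` (I j \<inter> K) \<subseteq> orb ` (N j \<inter> V)} \<inter>
              {t \<in> topspace T. B t ` J j \<subseteq> orb ` (N j \<inter> N (Suc j))}" by blast
        then show "openin T {t \<in> topspace T. B t ` I j \<subseteq> orb ` N j \<and> B t ` (I j \<inter> K) \<subseteq> orb ` (N j \<inter> V) \<and>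
                                       B t ` J j \<subseteq> orb ` (N j \<inter> N (Suc j))}"
          using o1 o2 o3 by (simp add: openin_Int)
      qed simp
    qed
    moreover have "t0 \<in> Ob"
    proof -
      have "0 \<in> I 0" using Ileft[of 0] by simp
      then have "Z t0 \<in> N 0" using Nj[OF m] fp(2) by auto
      moreover have "B t0 ` I j \<subseteq> orb ` N j \<and> B t0 ` (I j \<inter> K) \<subseteq> orb ` (N j \<inter> V) \<and>
                                       B t0 ` J j \<subseteq> orb ` (N j \<inter> N (Suc j))" if j: "j < m" for j
      proof (intro conjI)
        show "B t0 ` I j \<subseteq> orb ` N j"
        proof
          fix y assume "y \<in> B t0 ` I j"
          then obtain s where s: "s \<in> I j" "y = B t0 s" by blast
          then have "y = orb (f s)" using fp(3) Isub[OF j] by auto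
          moreover have "f s \<in> N j" using Nj[OF j] s by blast
          ultimately show "y \<in> orb ` N j" by blast
        qed
        show "B t0 ` (I j \<inter> K) \<subseteq> orb ` (N j \<inter> V)"
        proof
          fix y assume "y \<in> B t0 ` (I j \<inter> K)"
          then obtain s where s: "s \<in> I j" "s \<in> K" "y = B t0 s" by blast
          then have "y = orb (f s)" using fp(3) Isub[OF j] by auto
          moreover have "f s \<in> N j" using Nj[OF j] s by blast
          moreover have "f s \<in> V" using fK s unfolding f_def by blast
          ultimately show "y \<in> orb ` (N j \<inter> V)" by blast
        qed
        show "B t0 ` J j \<subseteq> orb ` (N j \<inter> N (Suc j))"
        proof (cases "Suc j < m")
          case True
          define s where "s = real (Suc j) / real m"
          have "s \<in> I j" "s \<in> I (Suc j)" unfolding s_def using Iright[of j] Ileft[of "Suc j"] by auto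
          then have "f s \<in> N j" "f s \<in> N (Suc j)" using Nj[OF j] Nj[OF True] by blast+
          moreover have "B t0 s = orb (f s)" using fp(3) Isub[OF j] \<open>s \<in> I j\<close> by auto
          ultimately show ?thesis unfolding J_def s_def using True by auto
        next
          case False then show ?thesis unfolding J_def by simp
        qed
      qed
      ultimately show ?thesis unfolding Ob_def using t0T by blast
    qed
    moreover have "Ob \<subseteq> {t \<in> topspace T. lift (B t) (Z t) ` K \<subseteq> V}"
    proof
      fix t assume tO: "t \<in> Ob"
      then have tT: "t \<in> topspace T" and Zt0: "Z t \<in> N 0"
        and cond: "\<And>j. j < m \<Longrightarrow> B t ` I j \<subseteq> orb ` N j \<and> B t ` (I j \<inter> K) \<subseteq> orb ` (N j \<inter> V) \<and>
                                       B t ` J j \<subseteq> orb ` (N j \<inter> N (Suc j))"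
        unfolding Ob_def by auto
      define g where "g = lift (B t) (Z t)"
      have gp: "g \<in> paths X" "g 0 = Z t" "\<And>s. s \<in> {0..1} \<Longrightarrow> orb (g s) = B t s"
        unfolding g_def using lift_props[OF Bp[OF tT] Zt[OF tT] e[OF tT]] by auto
      have gc: "continuous_map (top_of_set {0..1}) X g" using gp(1) unfolding paths_def pathin_def by simp
      have st: "g ` I j \<subseteq> N j" if j: "j < m" and gj: "g (real j / real m) \<in> N j" for j
      proof -
        have BI: "B t ` I j \<subseteq> orb ` N j" using cond[OF j] by blast
        have sc: "continuous_map (top_of_set (I j)) X (\<lambda>s. inv_into (N j) orb (B t s))"
          by (rule beta_sub_cont[OF Bc[OF tT] Isub[OF j] BI Nsheet])
        have gI: "continuous_map (top_of_set (I j)) X g"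
          by (rule continuous_map_from_subtopology_mono[OF gc Isub[OF j]])
        have inN: "inv_into (N j) orb (B t s) \<in> N j \<and> orb (inv_into (N j) orb (B t s)) = B t s" if "s \<in> I j" for s
          using sheet_inv_in[of "B t s" "N j"] BI that by blast
        have eqo: "orb (g s) = orb (inv_into (N j) orb (B t s))" if "s \<in> {real j / real m .. real (Suc j) / real m}" for s
        proof -
          have s01: "s \<in> {0..1}" using Isub[OF j] that unfolding I_def by blast
          have "orb (g s) = B t s" using gp(3)[OF s01] .
          moreover have "orb (inv_into (N j) orb (B t s)) = B t s" using inN[of s] that unfolding I_def by blast
          ultimately show ?thesis by simp
        qed
        have "inv_into (N j) orb (orb (g (real j / real m))) = g (real j / real m)"
          by (rule sheet_inv_eq[OF Nsheet gj])
        moreover have "orb (g (real j / real m)) = B t (real j / real m)"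
          using gp(3) Isub[OF j] Ileft[of j] by auto
        ultimately have g0: "g (real j / real m) = inv_into (N j) orb (B t (real j / real m))" by simp
        have eqg: "g s = inv_into (N j) orb (B t s)" if "s \<in> {real j / real m .. real (Suc j) / real m}" for s
          by (rule unique_lift[OF Ile gI[unfolded I_def] sc[unfolded I_def] eqo g0 that])
        show ?thesis
        proof
          fix y assume "y \<in> g ` I j"
          then obtain s where s: "s \<in> I j" "y = g s" by blast
          then show "y \<in> N j" using eqg[of s] inN[of s] unfolding I_def by auto
        qed
      qed
      have gN: "j < m \<Longrightarrow> g (real j / real m) \<in> N j" for j
      proof (induction j)
        case 0 then show ?case using gp(2) Zt0 by simp
      next
        case (Suc j)
        then have j: "j < m" by simp
        have "g ` I j \<subseteq> N j" using st[OF j Suc.IH[OF j]] .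
        then have gN1: "g (real (Suc j) / real m) \<in> N j" using Iright[of j] by blast
        have "B t ` J j \<subseteq> orb ` (N j \<inter> N (Suc j))" using cond[OF j] by blast
        then have "B t (real (Suc j) / real m) \<in> orb ` (N j \<inter> N (Suc j))" unfolding J_def using Suc.prems by simp
        then obtain w where w: "w \<in> N j" "w \<in> N (Suc j)" "orb w = B t (real (Suc j) / real m)" by blast
        have "orb (g (real (Suc j) / real m)) = B t (real (Suc j) / real m)"
          using gp(3) Isub[OF j] Iright[of j] by auto
        moreover have "inj_on orb (N j)" using Nsheet[of j] unfolding sheet_def by blast
        ultimately have "g (real (Suc j) / real m) = w"
          using inj_onD[of orb "N j" "g (real (Suc j) / real m)" w] gN1 w by simp
        then show ?case using w by simp
      qed
      show "t \<in> {t \<in> topspace T. lift (B t) (Z t) ` K \<subseteq> V}"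
      proof (simp add: tT, intro image_subsetI)
        fix s assume sK: "s \<in> K"
        then have s01: "s \<in> {0..1}" using KV(2) by blast
        obtain j where j: "j < m" "s \<in> I j" using interval_cover[OF s01 m] unfolding I_def by blast
        have "g s \<in> N j" using st[OF j(1) gN[OF j(1)]] j(2) by blast
        have "B t ` (I j \<inter> K) \<subseteq> orb ` (N j \<inter> V)" using cond[OF j(1)] by blast
        then have "B t s \<in> orb ` (N j \<inter> V)" using j(2) sK by blast
        then obtain w where w: "w \<in> N j" "w \<in> V" "orb w = B t s" by blast
        have "orb (g s) = B t s" using gp(3) s01 by blast
        moreover have "inj_on orb (N j)" using Nsheet[of j] unfolding sheet_def by blast
        ultimately have "g s = w" using inj_onD[of orb "N j" "g s" w] w \<open>g s \<in> N j\<close> by simp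
        then show "lift (B t) (Z t) s \<in> V" using w unfolding g_def by simp
      qed
    qed
    ultimately show "\<exists>T'. openin T T' \<and> t0 \<in> T' \<and> T' \<subseteq> {t \<in> topspace T. lift (B t) (Z t) ` K \<subseteq> V}" by blast
  qed
qed

lemma ineq2:
  assumes n: "n \<ge> 1"
  shows "TC_effl n X G act \<le> TC n Q"
  unfolding TC_effl_def TC_def
proof (rule secat_le[where f = "\<lambda>p. \<lambda>i\<in>{..<n}. if i = 0 then orb (fst p) else snd p (i - 1)"])
  define f where "f = (\<lambda>p::'a \<times> (nat \<Rightarrow> 'a set). \<lambda>i\<in>{..<n}. if i = 0 then orb (fst p) else snd p (i - 1))"
  have fc: "continuous_map (prod_topology X (power_top Q (n - 1))) (power_top Q n) f"
    unfolding power_top_def[of Q n] continuous_map_componentwise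
  proof (intro conjI ballI)
    show "f ` topspace (prod_topology X (power_top Q (n - 1))) \<subseteq> extensional {..<n}"
      unfolding f_def by auto
    fix k assume k: "k \<in> {..<n}"
    show "continuous_map (prod_topology X (power_top Q (n - 1))) Q (\<lambda>x. f x k)"
    proof (cases "k = 0")
      case True
      have "continuous_map (prod_topology X (power_top Q (n - 1))) Q (orb \<circ> fst)"
        by (rule continuous_map_compose[OF continuous_map_fst pi_cont])
      then show ?thesis unfolding f_def using k True by (simp add: o_def)
    next
      case False
      have pr: "continuous_map (power_top Q (n - 1)) Q (\<lambda>x. x (k - 1))"
        unfolding power_top_def using continuous_map_product_projection[of "k - 1" "{..<n - 1}" "\<lambda>i. Q"] k False by auto
      have "continuous_map (prod_topology X (power_top Q (n - 1))) Q ((\<lambda>x. x (k - 1)) \<circ> snd)"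
        by (rule continuous_map_compose[OF continuous_map_snd pr])
      then show ?thesis unfolding f_def using k False by (simp add: o_def)
    qed
  qed
  then show "continuous_map (prod_topology X (power_top Q (n - 1))) (power_top Q n)
     (\<lambda>p. \<lambda>i\<in>{..<n}. if i = 0 then orb (fst p) else snd p (i - 1))" unfolding f_def .
  fix U sg
  assume U: "openin (power_top Q n) U"
    and sg: "continuous_map (subtopology (power_top Q n) U) (multipath_space Q n) sg"
    and se: "\<forall>b\<in>U. eval_end n (sg b) = b"
  define V where "V = {p \<in> topspace (prod_topology X (power_top Q (n - 1))). f p \<in> U}"
  define T where "T = subtopology (prod_topology X (power_top Q (n - 1))) V"
  have tT: "topspace T = V" unfolding T_def V_def by auto
  have fT: "continuous_map T (subtopology (power_top Q n) U) f"
    unfolding T_def continuous_map_in_subtopology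
    using continuous_map_from_subtopology[OF fc] unfolding V_def by auto
  have sf: "continuous_map T (multipath_space Q n) (\<lambda>p. sg (f p))"
    using continuous_map_compose[OF fT sg] by (simp add: o_def)
  have Bc: "continuous_map T (path_space Q) (\<lambda>p. sg (f p) i)" if "i < n" for i
    using mp_proj[OF sf that] .
  have fstc: "continuous_map T X fst" unfolding T_def by (rule continuous_map_from_subtopology[OF continuous_map_fst])
  have pV: "fst p \<in> topspace X" "snd p \<in> extensional {..<n - 1}" if "p \<in> V" for p
    using that unfolding V_def by (auto simp: topspace_power_top PiE_iff)
  have n0: "0 < n" using n by simp
  have ev: "sg (f p) i 1 = f p i" if "p \<in> V" "i < n" for p i
  proof -
    have "f p \<in> U" using that unfolding V_def by simp
    then have "eval_end n (sg (f p)) = f p" using se by blast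
    then have "eval_end n (sg (f p)) i = f p i" by simp
    then show ?thesis unfolding eval_end_def using that(2) by simp
  qed
  have pth: "sg (f p) i \<in> paths Q" if "p \<in> V" "i < n" for p i
    using mp_top(1)[OF sf, of p] that tT by auto
  have st0: "sg (f p) i 0 = sg (f p) j 0" if "p \<in> V" "i < n" "j < n" for p i j
  proof -
    have "p \<in> topspace T" using that tT by simp
    from mp_top(2)[OF sf this] that(2,3) show ?thesis by blast
  qed
  define B0 where "B0 p = prev (sg (f p) 0)" for p
  have B0c: "continuous_map T (path_space Q) B0"
    unfolding B0_def using continuous_map_compose[OF Bc[OF n0] continuous_map_prev] by (simp add: o_def)
  have B0e: "orb (fst p) = B0 p 0" if "p \<in> topspace T" for p
  proof -
    have p: "p \<in> V" using that tT by simp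
    have "B0 p 0 = sg (f p) 0 1" unfolding B0_def prev_def by simp
    also have "\<dots> = f p 0" using ev[OF p n0] .
    also have "\<dots> = orb (fst p)" unfolding f_def using n0 by simp
    finally show ?thesis by simp
  qed
  define gam where "gam p = lift (B0 p) (fst p)" for p
  have gc: "continuous_map T (path_space X) gam"
    unfolding gam_def by (rule lift_cont[OF B0c fstc B0e])
  have gp: "gam p \<in> paths X" "gam p 0 = fst p" "\<And>s. s \<in> {0..1} \<Longrightarrow> orb (gam p s) = B0 p s" if "p \<in> V" for p
  proof -
    have bp: "B0 p \<in> paths Q" unfolding B0_def using prev_paths pth[OF that n0] by blast
    have pT: "p \<in> topspace T" using that tT by simp
    note L = lift_props[OF bp pV(1)[OF that] B0e[OF pT]]
    show "gam p \<in> paths X" "gam p 0 = fst p" "\<And>s. s \<in> {0..1} \<Longrightarrow> orb (gam p s) = B0 p s"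
      unfolding gam_def using L by auto
  qed
  define z where "z p = gam p 1" for p
  have zc: "continuous_map T X z"
    unfolding z_def using continuous_map_compose[OF gc continuous_map_eval[of 1]] by (simp add: o_def)
  have ze: "orb (z p) = sg (f p) i 0" if "p \<in> topspace T" "i < n" for p i
  proof -
    have p: "p \<in> V" using that tT by simp
    have "orb (z p) = B0 p 1" unfolding z_def using gp(3)[OF p, of 1] by simp
    also have "\<dots> = sg (f p) 0 0" unfolding B0_def prev_def by simp
    also have "\<dots> = sg (f p) i 0" using st0[OF p n0 that(2)] .
    finally show ?thesis .
  qed
  define s' where "s' p = (\<lambda>i\<in>{..<n}. if i = 0 then prev (gam p) else lift (sg (f p) i) (z p))" for p
  have lp: "lift (sg (f p) i) (z p) \<in> paths X \<and> lift (sg (f p) i) (z p) 0 = z p \<and>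
            (\<forall>s\<in>{0..1}. orb (lift (sg (f p) i) (z p) s) = sg (f p) i s)" if "p \<in> V" "i < n" for p i
  proof -
    have pT: "p \<in> topspace T" using that tT by simp
    have zt: "z p \<in> topspace X" using continuous_map_image_subset_topspace[OF zc] pT by blast
    show ?thesis using lift_props[OF pth[OF that] zt ze[OF pT that(2)]] by auto
  qed
  have s'0: "s' p i 0 = z p" if "p \<in> V" "i < n" for p i
  proof (cases "i = 0")
    case True then show ?thesis unfolding s'_def prev_def z_def using that by simp
  next
    case False then show ?thesis unfolding s'_def using lp[OF that] that by simp
  qed
  have "continuous_map T (multipath_space X n) s'"
  proof (rule mp_contI)
    fix i assume i: "i < n"
    show "continuous_map T (path_space X) (\<lambda>p. s' p i)"
    proof (cases "i = 0")
      case True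
      have "continuous_map T (path_space X) (prev \<circ> gam)"
        by (rule continuous_map_compose[OF gc continuous_map_prev])
      then show ?thesis unfolding s'_def using True i by (simp add: o_def)
    next
      case False
      have "continuous_map T (path_space X) (\<lambda>p. lift (sg (f p) i) (z p))"
        by (rule lift_cont[OF Bc[OF i] zc]) (use ze i in auto)
      then show ?thesis unfolding s'_def using False i by simp
    qed
  next
    fix p show "s' p \<in> extensional {..<n}" unfolding s'_def by simp
  next
    fix p i j assume "p \<in> topspace T" "i < n" "j < n"
    then show "s' p i 0 = s' p j 0" using s'0 tT by simp
  qed
  moreover have "(s' p 0 1, \<lambda>i\<in>{..<n - 1}. orb (s' p (Suc i) 1)) = p" if p: "p \<in> V" for p
  proof (rule prod_eqI)
    show "fst (s' p 0 1, \<lambda>i\<in>{..<n - 1}. orb (s' p (Suc i) 1)) = fst p"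
      unfolding s'_def prev_def using n0 gp(2)[OF p] by simp
    show "snd (s' p 0 1, \<lambda>i\<in>{..<n - 1}. orb (s' p (Suc i) 1)) = snd p"
      unfolding snd_conv
    proof (rule ext)
      fix k show "(\<lambda>i\<in>{..<n - 1}. orb (s' p (Suc i) 1)) k = snd p k"
      proof (cases "k < n - 1")
        case True
        then have k: "Suc k < n" by simp
        have "orb (s' p (Suc k) 1) = sg (f p) (Suc k) 1" unfolding s'_def using lp[OF p k] k by simp
        also have "\<dots> = f p (Suc k)" using ev[OF p k] .
        also have "\<dots> = snd p k" unfolding f_def using k by simp
        finally show ?thesis using True by simp
      next
        case False
        then show ?thesis using pV(2)[OF p] unfolding extensional_def by simp
      qed
    qed
  qed
  ultimately show "\<exists>s'. continuous_map (subtopology (prod_topology X (power_top Q (n - 1)))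
                {b \<in> topspace (prod_topology X (power_top Q (n - 1))). (\<lambda>i\<in>{..<n}. if i = 0 then orb (fst b) else snd b (i - 1)) \<in> U})
              (multipath_space X n) s' \<and>
          (\<forall>b\<in>{b \<in> topspace (prod_topology X (power_top Q (n - 1))). (\<lambda>i\<in>{..<n}. if i = 0 then orb (fst b) else snd b (i - 1)) \<in> U}.
              (s' b 0 1, \<lambda>i\<in>{..<n - 1}. orb (s' b (Suc i) 1)) = b)"
    unfolding T_def V_def f_def by blast
qed

end

theorem proposition3:
  fixes X :: "'a topology" and G :: "('g, 'm) monoid_scheme" and act :: "'a \<Rightarrow> 'g \<Rightarrow> 'a"
    and n :: nat
  assumes "Hausdorff_space X" and "path_connected_space X" and "locally_path_connected_space X"
    and "free_action G X act" and "finite (carrier G)" and "n \<ge> 2"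
  shows "TC_effv n X G act \<le> TC_effl n X G act \<and>
         TC_effl n X G act \<le> TC n (orbit_space X G act) \<and>
         TC n (orbit_space X G act) \<le> TC_orb n X G act"
proof -
  interpret fa X G act using assms(1,4,5) by unfold_locales
  have n1: "n \<ge> 1" using assms(6) by simp
  show ?thesis using ineq1[OF n1] ineq2[OF n1] ineq3 by simp
qed


end
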